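(* Let $\mu>0$, $p\in(0,1)$. The invariant measure $\mathbb{Q}$ of the environment process of the totally asymmetric random walk on dynamical percolation on $\mathbb{Z}$ and the Bernoulli$(p)$ product measure $\pi_p$ on $\{0,1\}^{E(\mathbb{Z})}$ are equivalent (mutually absolutely continuous).
   Context: TARWDP on $\mathbb{Z}$: edge states ($1$ = open) initially i.i.d. Bernoulli$(p)$, each resampled as independent Bernoulli$(p)$ at rate $\mu$; the walker starts at $0$ and at rings of a rate-$1$ Poisson clock moves from $x$ to $x+1$ iff $\{x,x+1\}$ is open. Environment process $\xi_t(\{x,x+1\})=\eta_t(\{X_t+x,X_t+x+1\})$ with semigroup $S(t)$, started from $\pi_p$. The measure $\mathbb{Q}$ is defined by $\mathbb{Q}[A]=\mathbb{E}[\tau_1]^{-1}\mathbb{E}[\int_0^{\tau_1}\pi_pS(t)[A]\,dt]$, where $\tau_1$ is the first regeneration time: with the infected set $I_t$ (start $I_0=\emptyset$; each edge examination by the walker adds a new copy of that edge; copies are removed at total rate $\mu|I_t|$, uniformly, a removal of the first copy of an edge triggering a Bernoulli$(p)$ resampling of that edge), $\tau_1=\inf\{t>0: I_t=\emptyset\text{ and } I_{t'}\neq\emptyset\text{ for some }t'<t\}$; $\tau_1>0$ a.s., has exponential tails and $\mathbb{E}[\tau_1]=e^{1/\mu}$. *)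

theory Defs
  imports "HOL-Probability.Probability"
begin

text \<open>Edges {x,x+1} of Z are identified with x :: int; True = open.
  All randomness lives on one product probability space indexed by src.\<close>

datatype src =
    Init int        \<comment> \<open>initial state of edge x (Bernoulli p)\<close>
  | ResT int nat    \<comment> \<open>n-th inter-resampling time of edge x (Exp mu)\<close>
  | ResV int nat    \<comment> \<open>value drawn at the n-th resampling of edge x (Bernoulli p)\<close>
  | Ring nat        \<comment> \<open>n-th inter-ring time of the walker's clock (Exp 1)\<close>
  | Life nat        \<comment> \<open>lifetime of the infected copy created at the n-th ring (Exp mu)\<close>

definition expo :: "real \<Rightarrow> real measure" where
  "expo l = density lborel (exponential_density l)"

definition bern :: "real \<Rightarrow> real measure" where
  "bern p = distr (measure_pmf (bernoulli_pmf p)) borel (\<lambda>b. if b then 1 else 0)"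

definition src_dist :: "real \<Rightarrow> real \<Rightarrow> src \<Rightarrow> real measure" where
  "src_dist mu p i = (case i of
      Init _ \<Rightarrow> bern p | ResT _ _ \<Rightarrow> expo mu | ResV _ _ \<Rightarrow> bern p
    | Ring _ \<Rightarrow> expo 1 | Life _ \<Rightarrow> expo mu)"

definition Omega :: "real \<Rightarrow> real \<Rightarrow> (src \<Rightarrow> real) measure" where
  "Omega mu p = Pi\<^sub>M UNIV (src_dist mu p)"

definition resample_time :: "(src \<Rightarrow> real) \<Rightarrow> int \<Rightarrow> nat \<Rightarrow> real" where
  "resample_time \<omega> x n = (\<Sum>k\<le>n. \<omega> (ResT x k))"

definition ring_time :: "(src \<Rightarrow> real) \<Rightarrow> nat \<Rightarrow> real" where
  "ring_time \<omega> n = (\<Sum>k\<le>n. \<omega> (Ring k))"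

definition edge_state :: "(src \<Rightarrow> real) \<Rightarrow> int \<Rightarrow> real \<Rightarrow> bool" where
  "edge_state \<omega> x t =
     (let N = card {n. resample_time \<omega> x n \<le> t}
      in if N = 0 then \<omega> (Init x) = 1 else \<omega> (ResV x (N - 1)) = 1)"

primrec wpos :: "(src \<Rightarrow> real) \<Rightarrow> nat \<Rightarrow> int" where
  "wpos \<omega> 0 = 0"
| "wpos \<omega> (Suc n) =
     (if edge_state \<omega> (wpos \<omega> n) (ring_time \<omega> n) then wpos \<omega> n + 1 else wpos \<omega> n)"

definition walker_pos :: "(src \<Rightarrow> real) \<Rightarrow> real \<Rightarrow> int" where
  "walker_pos \<omega> t = wpos \<omega> (card {n. ring_time \<omega> n \<le> t})"

definition env :: "(src \<Rightarrow> real) \<Rightarrow> real \<Rightarrow> int \<Rightarrow> bool" where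
  "env \<omega> t = (\<lambda>y. edge_state \<omega> (walker_pos \<omega> t + y) t)"

definition ENV :: "(int \<Rightarrow> bool) measure" where
  "ENV = Pi\<^sub>M UNIV (\<lambda>_. count_space UNIV)"

definition pi_p :: "real \<Rightarrow> (int \<Rightarrow> bool) measure" where
  "pi_p p = Pi\<^sub>M UNIV (\<lambda>_. measure_pmf (bernoulli_pmf p))"

text \<open>pi_p S(t): law of the environment process at time t started from pi_p.\<close>
definition env_law :: "real \<Rightarrow> real \<Rightarrow> real \<Rightarrow> (int \<Rightarrow> bool) measure" where
  "env_law mu p t = distr (Omega mu p) ENV (\<lambda>\<omega>. env \<omega> t)"

text \<open>Infected set: one copy per edge examination (ring), each copy removed after an
  independent Exp(mu) lifetime (equivalently, uniform removal at total rate mu |I_t|).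
  I_t is nonempty iff some copy is alive at time t.\<close>
definition infected :: "(src \<Rightarrow> real) \<Rightarrow> real \<Rightarrow> bool" where
  "infected \<omega> t = (\<exists>n. ring_time \<omega> n \<le> t \<and> t < ring_time \<omega> n + \<omega> (Life n))"

definition tau1 :: "(src \<Rightarrow> real) \<Rightarrow> real" where
  "tau1 \<omega> = Inf {t. 0 < t \<and> \<not> infected \<omega> t \<and> (\<exists>t'<t. infected \<omega> t')}"

definition Q_fun :: "real \<Rightarrow> real \<Rightarrow> (int \<Rightarrow> bool) set \<Rightarrow> ennreal" where
  "Q_fun mu p A =
     (\<integral>\<^sup>+\<omega>. (\<integral>\<^sup>+t\<in>{0..tau1 \<omega>}. emeasure (env_law mu p t) A \<partial>lborel) \<partial>Omega mu p)
     / (\<integral>\<^sup>+\<omega>. ennreal (tau1 \<omega>) \<partial>Omega mu p)"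

definition Q :: "real \<Rightarrow> real \<Rightarrow> (int \<Rightarrow> bool) measure" where
  "Q mu p = measure_of (space ENV) (sets ENV) (Q_fun mu p)"

end

theory Submission
  imports Defs
begin

lemma prob_bern: "prob_space (bern p)"
  unfolding bern_def
  by (intro prob_space.prob_space_distr prob_space_measure_pmf) auto

lemma prob_expo: "0 < l \<Longrightarrow> prob_space (expo l)"
  unfolding expo_def by (rule prob_space_exponential_density)

lemma prob_src: "0 < mu \<Longrightarrow> prob_space (src_dist mu p i)"
  unfolding src_dist_def by (cases i) (auto intro: prob_bern prob_expo)

lemma prob_Omega: "0 < mu \<Longrightarrow> prob_space (Omega mu p)"
  unfolding Omega_def by (intro prob_space_PiM prob_src)

lemma space_Omega[simp]: "space (Omega mu p) = UNIV"
  unfolding Omega_def by (auto simp: space_PiM src_dist_def bern_def expo_def split: src.splits)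

lemma sets_src[simp, measurable_cong]: "sets (src_dist mu p i) = sets borel"
  unfolding src_dist_def by (cases i) (auto simp: bern_def expo_def)

lemma space_src[simp]: "space (src_dist mu p i) = UNIV"
  using sets_eq_imp_space_eq[OF sets_src[of mu p i]] by simp

lemma resample:
  assumes mu: "0 < mu" and F: "F \<in> borel_measurable (Omega mu p)"
  shows "(\<integral>\<^sup>+\<omega>. F \<omega> \<partial>Omega mu p) = (\<integral>\<^sup>+\<omega>. (\<integral>\<^sup>+x. F (fun_upd \<omega> i x) \<partial>src_dist mu p i) \<partial>Omega mu p)"
proof -
  interpret Mi: prob_space "src_dist mu p i" using prob_src[OF mu] .
  interpret O: prob_space "Omega mu p" using prob_Omega[OF mu] .
  interpret PS: pair_sigma_finite "src_dist mu p i" "Omega mu p" ..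
  have D: "distr (src_dist mu p i \<Otimes>\<^sub>M Omega mu p) (Omega mu p) (\<lambda>(x, X). X(i := x)) = Omega mu p"
    using distr_pair_PiM_eq_PiM[of UNIV "src_dist mu p" i] prob_src[OF mu]
    unfolding Omega_def by simp
  have m: "(\<lambda>(x, X). X(i := x)) \<in> measurable (src_dist mu p i \<Otimes>\<^sub>M Omega mu p) (Omega mu p)"
    unfolding Omega_def
  proof (rule measurable_PiM_single')
    fix j :: src
    show "(\<lambda>\<omega>. (case \<omega> of (x, X) \<Rightarrow> X(i := x)) j) \<in> measurable (src_dist mu p i \<Otimes>\<^sub>M Pi\<^sub>M UNIV (src_dist mu p)) (src_dist mu p j)"
    proof (cases "j = i")
      case True then show ?thesis by (simp add: split_beta')
    next
      case False then show ?thesis by (simp add: split_beta')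
    qed
  qed (auto simp: space_PiM)
  have "(\<integral>\<^sup>+\<omega>. F \<omega> \<partial>Omega mu p) = (\<integral>\<^sup>+\<omega>. F \<omega> \<partial>distr (src_dist mu p i \<Otimes>\<^sub>M Omega mu p) (Omega mu p) (\<lambda>(x, X). X(i := x)))"
    by (simp add: D)
  also have "\<dots> = (\<integral>\<^sup>+z. F (case z of (x, X) \<Rightarrow> X(i := x)) \<partial>(src_dist mu p i \<Otimes>\<^sub>M Omega mu p))"
    by (rule nn_integral_distr[OF m]) (simp add: F)
  also have "\<dots> = (\<integral>\<^sup>+\<omega>. (\<integral>\<^sup>+x. F (fun_upd \<omega> i x) \<partial>src_dist mu p i) \<partial>Omega mu p)"
    by (subst PS.nn_integral_snd[symmetric]) (auto intro!: measurable_compose[OF m F])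
  finally show ?thesis .
qed


lemma countable_finite_card: "countable {F::nat set. finite F \<and> card F = k}"
  by (rule countable_subset[OF _ countable_Collect_finite]) auto

lemma card_eq_iff_aux:
  "(card {n::nat. P n} = k) \<longleftrightarrow>
    ((k = 0 \<and> (\<forall>m. \<exists>n\<ge>m. P n)) \<or> (\<exists>F\<in>{F. finite F \<and> card F = k}. \<forall>n. P n = (n \<in> F)))"
proof
  assume c: "card {n. P n} = k"
  show "(k = 0 \<and> (\<forall>m. \<exists>n\<ge>m. P n)) \<or> (\<exists>F\<in>{F. finite F \<and> card F = k}. \<forall>n. P n = (n \<in> F))"
  proof (cases "finite {n. P n}")
    case True then show ?thesis using c by (intro disjI2 bexI[of _ "{n. P n}"]) auto
  next
    case False then show ?thesis using c infinite_nat_iff_unbounded_le[of "{n. P n}"] by auto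
  qed
next
  assume "(k = 0 \<and> (\<forall>m. \<exists>n\<ge>m. P n)) \<or> (\<exists>F\<in>{F. finite F \<and> card F = k}. \<forall>n. P n = (n \<in> F))"
  then show "card {n. P n} = k"
  proof
    assume "k = 0 \<and> (\<forall>m. \<exists>n\<ge>m. P n)"
    then show ?thesis using infinite_nat_iff_unbounded_le[of "{n. P n}"] by auto
  next
    assume "\<exists>F\<in>{F. finite F \<and> card F = k}. \<forall>n. P n = (n \<in> F)"
    then obtain F where "finite F" "card F = k" "\<forall>n. P n = (n \<in> F)" by auto
    then have "{n. P n} = F" by auto
    then show ?thesis using \<open>card F = k\<close> by simp
  qed
qed

lemma measurable_card_nat[measurable]:
  assumes [measurable]: "\<And>n. Measurable.pred M (P n)"
  shows "(\<lambda>z. card {n::nat. P n z}) \<in> measurable M (count_space UNIV)"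
  unfolding measurable_count_space_eq2_countable
proof safe
  fix k :: nat
  have cnt: "countable {F::nat set. finite F \<and> card F = k}" by (rule countable_finite_card)
  have "(\<lambda>z. card {n. P n z}) -` {k} \<inter> space M =
     {z \<in> space M. (k = 0 \<and> (\<forall>m. \<exists>n\<ge>m. P n z)) \<or> (\<exists>F\<in>{F. finite F \<and> card F = k}. \<forall>n. P n z = (n \<in> F))}"
    using card_eq_iff_aux[of "\<lambda>n. P n _" k] by auto
  also have "\<dots> \<in> sets M"
    using cnt by measurable
  finally show "(\<lambda>z. card {n. P n z}) -` {k} \<inter> space M \<in> sets M" .
qed auto

lemma meas_coord[measurable]: "(\<lambda>\<omega>. \<omega> i) \<in> borel_measurable (Omega mu p)"
  unfolding Omega_def
  using measurable_component_singleton[of i UNIV "src_dist mu p"]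
  by (simp cong: measurable_cong_sets)

lemma meas_resample_time[measurable]: "(\<lambda>\<omega>. resample_time \<omega> x n) \<in> borel_measurable (Omega mu p)"
  unfolding resample_time_def by measurable

lemma meas_ring_time[measurable]: "(\<lambda>\<omega>. ring_time \<omega> n) \<in> borel_measurable (Omega mu p)"
  unfolding ring_time_def by measurable

lemma edge_state_alt:
  "edge_state \<omega> x t \<longleftrightarrow> (\<exists>N. card {n. resample_time \<omega> x n \<le> t} = N \<and>
     ((N = 0 \<and> \<omega> (Init x) = 1) \<or> (N \<noteq> 0 \<and> \<omega> (ResV x (N - 1)) = 1)))"
  unfolding edge_state_def Let_def by auto

lemma meas_edge_state_pair:
  "Measurable.pred (borel \<Otimes>\<^sub>M Omega mu p) (\<lambda>z. edge_state (snd z) x (fst z))"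
  unfolding edge_state_alt by measurable

lemma meas_edge_state[measurable]:
  assumes [measurable]: "T \<in> borel_measurable M" "W \<in> measurable M (Omega mu p)"
  shows "Measurable.pred M (\<lambda>z. edge_state (W z) x (T z))"
  using measurable_compose[OF _ meas_edge_state_pair, of "\<lambda>z. (T z, W z)" M] by simp

lemma meas_wpos[measurable]: "(\<lambda>\<omega>. wpos \<omega> n) \<in> measurable (Omega mu p) (count_space UNIV)"
proof (induction n)
  case 0 then show ?case by simp
next
  case (Suc n)
  have "(\<lambda>\<omega>. (\<lambda>x \<omega>. if edge_state \<omega> x (ring_time \<omega> n) then x + 1 else x) (wpos \<omega> n) \<omega>)
     \<in> measurable (Omega mu p) (count_space UNIV)"
    by (rule measurable_compose_countable'[OF _ Suc]) (auto)
  then show ?case by simp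
qed

lemma meas_walker_pos_pair:
  "(\<lambda>z. walker_pos (snd z) (fst z)) \<in> measurable (borel \<Otimes>\<^sub>M Omega mu p) (count_space UNIV)"
proof -
  have "(\<lambda>z. (\<lambda>k z. wpos (snd z) k) (card {n. ring_time (snd z) n \<le> fst z}) z)
     \<in> measurable (borel \<Otimes>\<^sub>M Omega mu p) (count_space UNIV)"
    by (rule measurable_compose_countable'[OF measurable_compose[OF measurable_snd meas_wpos]]) measurable
  then show ?thesis unfolding walker_pos_def by simp
qed

lemma meas_walker_pos[measurable]:
  assumes [measurable]: "T \<in> borel_measurable M" "W \<in> measurable M (Omega mu p)"
  shows "(\<lambda>z. walker_pos (W z) (T z)) \<in> measurable M (count_space UNIV)"
  using measurable_compose[OF _ meas_walker_pos_pair, of "\<lambda>z. (T z, W z)" M] by simp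

lemma meas_env_pair:
  "(\<lambda>z. env (snd z) (fst z)) \<in> measurable (borel \<Otimes>\<^sub>M Omega mu p) ENV"
  unfolding ENV_def
proof (rule measurable_PiM_single')
  fix y :: int
  have "(\<lambda>z. (\<lambda>k z. edge_state (snd z) (k + y) (fst z)) (walker_pos (snd z) (fst z)) z)
     \<in> measurable (borel \<Otimes>\<^sub>M Omega mu p) (count_space UNIV)"
    by (rule measurable_compose_countable'[OF _ meas_walker_pos_pair]) measurable
  then show "(\<lambda>z. env (snd z) (fst z) y) \<in> measurable (borel \<Otimes>\<^sub>M Omega mu p) (count_space UNIV)"
    unfolding env_def by simp
qed (auto simp: space_PiM)

lemma meas_env[measurable]:
  assumes [measurable]: "T \<in> borel_measurable M" "W \<in> measurable M (Omega mu p)"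
  shows "(\<lambda>z. env (W z) (T z)) \<in> measurable M ENV"
  using measurable_compose[OF _ meas_env_pair, of "\<lambda>z. (T z, W z)" M] by simp

lemma meas_eta[measurable]:
  assumes [measurable]: "T \<in> borel_measurable M" "W \<in> measurable M (Omega mu p)"
  shows "(\<lambda>z. \<lambda>y. edge_state (W z) (e y) (T z)) \<in> measurable M ENV"
  unfolding ENV_def by (rule measurable_PiM_single') (auto simp: space_PiM)


lemma indep_coord:
  assumes mu: "0 < mu" and G[measurable]: "G \<in> borel_measurable (Omega mu p)"
    and h[measurable]: "h \<in> borel_measurable borel"
    and inv: "\<And>\<omega> v. G (fun_upd \<omega> i v) = G \<omega>"
  shows "(\<integral>\<^sup>+\<omega>. G \<omega> * h (\<omega> i) \<partial>Omega mu p) = (\<integral>\<^sup>+\<omega>. G \<omega> \<partial>Omega mu p) * (\<integral>\<^sup>+x. h x \<partial>src_dist mu p i)"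
proof -
  have hm: "h \<in> borel_measurable (src_dist mu p i)"
    using h by (simp cong: measurable_cong_sets)
  have "(\<integral>\<^sup>+\<omega>. G \<omega> * h (\<omega> i) \<partial>Omega mu p) =
      (\<integral>\<^sup>+\<omega>. (\<integral>\<^sup>+x. G (fun_upd \<omega> i x) * h ((fun_upd \<omega> i x) i) \<partial>src_dist mu p i) \<partial>Omega mu p)"
    by (rule resample[OF mu]) measurable
  also have "\<dots> = (\<integral>\<^sup>+\<omega>. G \<omega> * (\<integral>\<^sup>+x. h x \<partial>src_dist mu p i) \<partial>Omega mu p)"
    by (simp add: inv nn_integral_cmult hm)
  also have "\<dots> = (\<integral>\<^sup>+\<omega>. G \<omega> \<partial>Omega mu p) * (\<integral>\<^sup>+x. h x \<partial>src_dist mu p i)"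
    by (rule nn_integral_multc) simp
  finally show ?thesis .
qed

lemma indep_coord_set:
  assumes mu: "0 < mu" and G[measurable]: "Measurable.pred (Omega mu p) G"
    and B[measurable]: "B \<in> sets borel"
    and inv: "\<And>\<omega> v. G (fun_upd \<omega> i v) = G \<omega>"
  shows "emeasure (Omega mu p) {\<omega>. G \<omega> \<and> \<omega> i \<in> B} = emeasure (Omega mu p) {\<omega>. G \<omega>} * emeasure (src_dist mu p i) B"
proof -
  have "{\<omega>\<in>space (Omega mu p). G \<omega> \<and> \<omega> i \<in> B} \<in> sets (Omega mu p)" by measurable
  then have [measurable]: "{\<omega>. G \<omega> \<and> \<omega> i \<in> B} \<in> sets (Omega mu p)" by simp
  have "{\<omega>\<in>space (Omega mu p). G \<omega>} \<in> sets (Omega mu p)" by measurable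
  then have [measurable]: "{\<omega>. G \<omega>} \<in> sets (Omega mu p)" by simp
  have "emeasure (Omega mu p) {\<omega>. G \<omega> \<and> \<omega> i \<in> B} =
     (\<integral>\<^sup>+\<omega>. indicator {\<omega>. G \<omega> \<and> \<omega> i \<in> B} \<omega> \<partial>Omega mu p)"
    by (rule nn_integral_indicator[symmetric]) simp
  also have "\<dots> = (\<integral>\<^sup>+\<omega>. indicator {\<omega>. G \<omega>} \<omega> * indicator B (\<omega> i) \<partial>Omega mu p)"
    by (rule nn_integral_cong) (simp add: indicator_def)
  also have "\<dots> = (\<integral>\<^sup>+\<omega>. indicator {\<omega>. G \<omega>} \<omega> \<partial>Omega mu p) * (\<integral>\<^sup>+x. indicator B x \<partial>src_dist mu p i)"
    by (rule indep_coord[OF mu]) (auto simp: indicator_def inv)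
  also have "\<dots> = emeasure (Omega mu p) {\<omega>. G \<omega>} * emeasure (src_dist mu p i) B"
    by (subst nn_integral_indicator; simp)+
  finally show ?thesis .
qed

definition sel :: "int \<Rightarrow> nat \<Rightarrow> src" where
  "sel x N = (case N of 0 \<Rightarrow> Init x | Suc k \<Rightarrow> ResV x k)"

lemma edge_state_sel: "edge_state \<omega> x t = (\<omega> (sel x (card {n. resample_time \<omega> x n \<le> t})) = 1)"
  by (simp add: edge_state_def Let_def sel_def split: nat.split)

lemma resample_time_upd: "i \<notin> range (ResT x) \<Longrightarrow> resample_time (fun_upd \<omega> i v) x n = resample_time \<omega> x n"
  unfolding resample_time_def by (auto intro!: sum.cong)

lemma edge_state_upd:
  "i \<notin> range (ResT x) \<Longrightarrow> i \<noteq> Init x \<Longrightarrow> i \<notin> range (ResV x) \<Longrightarrow>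
    edge_state (fun_upd \<omega> i v) x t = edge_state \<omega> x t"
  unfolding edge_state_def Let_def by (auto simp add: resample_time_upd)

lemma src_dist_sel[simp]: "src_dist mu p (sel x N) = bern p"
  by (simp add: src_dist_def sel_def split: nat.split)

lemma bern_bool: "emeasure (bern p) {r. (r = 1) \<in> F} = emeasure (measure_pmf (bernoulli_pmf p)) F"
proof -
  have "emeasure (bern p) {r. (r = 1) \<in> F} =
      emeasure (measure_pmf (bernoulli_pmf p)) ((\<lambda>b::bool. if b then 1 else 0::real) -` {r. (r = 1) \<in> F} \<inter> space (measure_pmf (bernoulli_pmf p)))"
    unfolding bern_def by (rule emeasure_distr) auto
  also have "(\<lambda>b::bool. if b then 1 else 0::real) -` {r. (r = 1) \<in> F} \<inter> space (measure_pmf (bernoulli_pmf p)) = F"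
    by (rule set_eqI) (case_tac x; auto)
  finally show ?thesis .
qed

lemma sets_Omega_Collect: "Measurable.pred (Omega mu p) P \<Longrightarrow> {\<omega>. P \<omega>} \<in> sets (Omega mu p)"
  unfolding pred_def by simp

lemma meas_edge_mem[measurable]: "Measurable.pred (Omega mu p) (\<lambda>\<omega>. edge_state \<omega> x t \<in> F)"
proof -
  have "(\<lambda>\<omega>. edge_state \<omega> x t \<in> F) = (\<lambda>\<omega>. (edge_state \<omega> x t \<and> True \<in> F) \<or> (\<not> edge_state \<omega> x t \<and> False \<in> F))"
    by (rule ext) (metis (full_types))
  also have "Measurable.pred (Omega mu p) \<dots>" by measurable
  finally show ?thesis .
qed

lemma cyl:
  assumes mu: "0 < mu" and inj: "inj e" and J: "finite J"
    and C[measurable]: "Measurable.pred (Omega mu p) C"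
    and Cinv: "\<And>\<omega> v j k. j \<in> J \<Longrightarrow> C (fun_upd \<omega> (Init (e j)) v) = C \<omega> \<and> C (fun_upd \<omega> (ResV (e j) k) v) = C \<omega>"
  shows "emeasure (Omega mu p) {\<omega>. (\<forall>j\<in>J. edge_state \<omega> (e j) t \<in> F j) \<and> C \<omega>} =
     (\<Prod>j\<in>J. emeasure (measure_pmf (bernoulli_pmf p)) (F j)) * emeasure (Omega mu p) {\<omega>. C \<omega>}"
  using J Cinv
proof (induction J rule: finite_induct)
  case empty then show ?case by simp
next
  case (insert j J')
  define x where "x = e j"
  define B where "B = {r::real. (r = 1) \<in> F j}"
  define Rest where "Rest = (\<lambda>\<omega>. (\<forall>j'\<in>J'. edge_state \<omega> (e j') t \<in> F j') \<and> C \<omega>)"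
  define K where "K = (\<lambda>\<omega>. card {n. resample_time \<omega> x n \<le> t})"
  have [measurable]: "Measurable.pred (Omega mu p) Rest" unfolding Rest_def
    by (intro pred_intros_logic pred_intros_finite[OF insert.hyps(1)] meas_edge_mem C)
  have [measurable]: "K \<in> measurable (Omega mu p) (count_space UNIV)" unfolding K_def by measurable
  have "B = (if True \<in> F j then {1} else {}) \<union> (if False \<in> F j then UNIV - {1} else {})"
    unfolding B_def by (auto; metis (full_types))
  then have [measurable]: "B \<in> sets borel" by simp
  have ne: "e j' \<noteq> x" if "j' \<in> J'" for j'
    using insert.hyps(2) that inj unfolding x_def inj_def by auto
  have eq: "{\<omega>. (\<forall>j\<in>insert j J'. edge_state \<omega> (e j) t \<in> F j) \<and> C \<omega>} =
      (\<Union>N. {\<omega>. (K \<omega> = N \<and> Rest \<omega>) \<and> \<omega> (sel x N) \<in> B})"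
    unfolding Rest_def K_def B_def x_def by (auto simp: edge_state_sel)
  have disj: "disjoint_family (\<lambda>N. {\<omega>. (K \<omega> = N \<and> Rest \<omega>) \<and> \<omega> (sel x N) \<in> B})"
    unfolding disjoint_family_on_def by auto
  have trm: "emeasure (Omega mu p) {\<omega>. (K \<omega> = N \<and> Rest \<omega>) \<and> \<omega> (sel x N) \<in> B} =
      emeasure (Omega mu p) {\<omega>. K \<omega> = N \<and> Rest \<omega>} * emeasure (measure_pmf (bernoulli_pmf p)) (F j)" for N
  proof -
    have inv: "(K (fun_upd \<omega> (sel x N) v) = N \<and> Rest (fun_upd \<omega> (sel x N) v)) = (K \<omega> = N \<and> Rest \<omega>)" for \<omega> v
    proof -
      have "K (fun_upd \<omega> (sel x N) v) = K \<omega>"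
        unfolding K_def by (subst resample_time_upd) (auto simp: sel_def split: nat.splits)
      moreover have "edge_state (fun_upd \<omega> (sel x N) v) (e j') t = edge_state \<omega> (e j') t" if "j' \<in> J'" for j'
        using ne[OF that] by (intro edge_state_upd) (auto simp: sel_def split: nat.splits)
      moreover have "C (fun_upd \<omega> (sel x N) v) = C \<omega>"
        using insert.prems[of j \<omega> v] unfolding x_def sel_def by (cases N) (auto simp: fun_upd_def)
      ultimately show ?thesis unfolding Rest_def by auto
    qed
    show ?thesis
      by (subst indep_coord_set[OF mu _ _ inv]) (auto simp: B_def bern_bool)
  qed
  have "emeasure (Omega mu p) {\<omega>. (\<forall>j\<in>insert j J'. edge_state \<omega> (e j) t \<in> F j) \<and> C \<omega>} =
      (\<Sum>N. emeasure (Omega mu p) {\<omega>. (K \<omega> = N \<and> Rest \<omega>) \<and> \<omega> (sel x N) \<in> B})"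
  proof -
    have "{\<omega>. (K \<omega> = N \<and> Rest \<omega>) \<and> \<omega> (sel x N) \<in> B} \<in> sets (Omega mu p)" for N
      by (rule sets_Omega_Collect) measurable
    then show ?thesis unfolding eq by (intro suminf_emeasure[symmetric, OF _ disj]) auto
  qed
  also have "\<dots> = (\<Sum>N. emeasure (Omega mu p) {\<omega>. K \<omega> = N \<and> Rest \<omega>}) * emeasure (measure_pmf (bernoulli_pmf p)) (F j)"
    unfolding trm by (rule ennreal_suminf_multc)
  also have "(\<Sum>N. emeasure (Omega mu p) {\<omega>. K \<omega> = N \<and> Rest \<omega>}) = emeasure (Omega mu p) {\<omega>. Rest \<omega>}"
  proof -
    have "{\<omega>. Rest \<omega>} = (\<Union>N. {\<omega>. K \<omega> = N \<and> Rest \<omega>})" by auto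
    moreover have "disjoint_family (\<lambda>N. {\<omega>. K \<omega> = N \<and> Rest \<omega>})"
      unfolding disjoint_family_on_def by auto
    moreover have "{\<omega>. K \<omega> = N \<and> Rest \<omega>} \<in> sets (Omega mu p)" for N
      by (rule sets_Omega_Collect) measurable
    ultimately show ?thesis
      using suminf_emeasure[of "\<lambda>N. {\<omega>. K \<omega> = N \<and> Rest \<omega>}" "Omega mu p"] by auto
  qed
  also have "emeasure (Omega mu p) {\<omega>. Rest \<omega>} =
     (\<Prod>j\<in>J'. emeasure (measure_pmf (bernoulli_pmf p)) (F j)) * emeasure (Omega mu p) {\<omega>. C \<omega>}"
    unfolding Rest_def by (rule insert.IH) (use insert.prems in auto)
  finally show ?case using insert.hyps by (simp add: ac_simps)
qed

lemma sets_ENV_pi: "sets ENV = sets (pi_p p)"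
  unfolding ENV_def pi_p_def by (intro sets_PiM_cong) auto

lemma space_ENV[simp]: "space ENV = UNIV"
  unfolding ENV_def by (simp add: space_PiM)

lemma eta_law:
  assumes mu: "0 < mu" and inj: "inj e"
  shows "distr (Omega mu p) ENV (\<lambda>\<omega>. \<lambda>y. edge_state \<omega> (e y) t) = pi_p p"
proof -
  interpret product_prob_space "\<lambda>_::int. measure_pmf (bernoulli_pmf p)" UNIV
    by unfold_locales
  interpret O: prob_space "Omega mu p" by (rule prob_Omega[OF mu])
  show ?thesis unfolding pi_p_def
  proof (rule PiM_eq)
    show "sets (distr (Omega mu p) ENV (\<lambda>\<omega> y. edge_state \<omega> (e y) t)) = sets (Pi\<^sub>M UNIV (\<lambda>_. measure_pmf (bernoulli_pmf p)))"
      using sets_ENV_pi[of p] unfolding pi_p_def by simp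
  next
    fix J :: "int set" and F assume J: "finite J" "J \<subseteq> UNIV" and F: "\<And>j. j \<in> J \<Longrightarrow> F j \<in> sets (measure_pmf (bernoulli_pmf p))"
    have X: "prod_emb UNIV (\<lambda>_. measure_pmf (bernoulli_pmf p)) J (Pi\<^sub>E J F) \<in> sets ENV"
      using sets_ENV_pi[of p] J F unfolding pi_p_def by (auto intro!: sets_PiM_I)
    have pre: "(\<lambda>\<omega> y. edge_state \<omega> (e y) t) -` prod_emb UNIV (\<lambda>_. measure_pmf (bernoulli_pmf p)) J (Pi\<^sub>E J F)
        = {\<omega>. (\<forall>j\<in>J. edge_state \<omega> (e j) t \<in> F j) \<and> True}"
      by (auto simp: prod_emb_def space_PiM PiE_iff)
    have "emeasure (distr (Omega mu p) ENV (\<lambda>\<omega> y. edge_state \<omega> (e y) t)) (prod_emb UNIV (\<lambda>_. measure_pmf (bernoulli_pmf p)) J (Pi\<^sub>E J F))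
       = emeasure (Omega mu p) {\<omega>. (\<forall>j\<in>J. edge_state \<omega> (e j) t \<in> F j) \<and> True}"
      by (subst emeasure_distr) (simp_all only: X pre space_Omega Int_UNIV_right, measurable)
    also have "\<dots> = (\<Prod>j\<in>J. emeasure (measure_pmf (bernoulli_pmf p)) (F j)) * emeasure (Omega mu p) {\<omega>. True}"
      by (rule cyl[OF mu inj J(1)]) auto
    also have "emeasure (Omega mu p) {\<omega>. True} = 1"
      using O.emeasure_space_1 by simp
    finally show "emeasure (distr (Omega mu p) ENV (\<lambda>\<omega> y. edge_state \<omega> (e y) t)) (prod_emb UNIV (\<lambda>_. measure_pmf (bernoulli_pmf p)) J (Pi\<^sub>E J F))
       = (\<Prod>j\<in>J. emeasure (measure_pmf (bernoulli_pmf p)) (F j))" by simp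
  qed
qed


lemma src_dist_simps[simp]: "src_dist mu p (Ring k) = expo 1" "src_dist mu p (Life k) = expo mu"
  "src_dist mu p (ResT x k) = expo mu" "src_dist mu p (Init x) = bern p" "src_dist mu p (ResV x k) = bern p"
  by (simp_all add: src_dist_def)

lemma meas_eta_set: "A \<in> sets ENV \<Longrightarrow> Measurable.pred (Omega mu p) (\<lambda>\<omega>. (\<lambda>y. edge_state \<omega> (e y) t) \<in> A)"
  unfolding pred_def using measurable_sets[OF meas_eta[of "\<lambda>_. t" "Omega mu p" "\<lambda>\<omega>. \<omega>" mu p e]]
  by (simp add: vimage_def)

lemma meas_env_set: "A \<in> sets ENV \<Longrightarrow> Measurable.pred (Omega mu p) (\<lambda>\<omega>. env \<omega> t \<in> A)"
  unfolding pred_def using measurable_sets[OF meas_env[of "\<lambda>_. t" "Omega mu p" "\<lambda>\<omega>. \<omega>" mu p]]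
  by (simp add: vimage_def)

lemma expo_gt:
  assumes l: "0 < l" and a: "0 \<le> a"
  shows "emeasure (expo l) {a<..} = ennreal (exp (- a * l))"
proof -
  interpret prob_space "expo l" by (rule prob_expo[OF l])
  have D: "distributed (expo l) lborel (\<lambda>x. x) (exponential_density l)"
    unfolding distributed_def expo_def by (auto simp: distr_id2)
  have "\<P>(x in expo l. a < x) = exp (- a * l)"
    by (rule exponential_distributedD_gt[OF D a l])
  moreover have "{x \<in> space (expo l). a < x} = {a<..}"
    by (auto simp: expo_def)
  ultimately show ?thesis
    by (simp add: emeasure_eq_measure)
qed

lemma expo_AE_nonneg: "AE x in expo l. 0 \<le> x"
  unfolding expo_def by (subst AE_density) (auto simp: exponential_density_def)

lemma AE_src_Ring: "AE x in src_dist mu p (Ring k). 0 \<le> x"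
  by (subst src_dist_simps(1)) (rule expo_AE_nonneg)

lemma AE_Ring_nonneg: "0 < mu \<Longrightarrow> AE \<omega> in Omega mu p. \<forall>k. 0 \<le> \<omega> (Ring k)"
proof -
  assume mu: "0 < mu"
  have "AE \<omega> in Omega mu p. 0 \<le> \<omega> (Ring k)" for k
    unfolding Omega_def
    by (rule AE_PiM_component[where P="\<lambda>x. 0 \<le> x"]) (use AE_src_Ring prob_src[OF mu] in auto)
  then show ?thesis by (simp add: AE_all_countable)
qed

lemma env_law_emeasure:
  assumes A: "A \<in> sets ENV"
  shows "emeasure (env_law mu p t) A = emeasure (Omega mu p) {\<omega>. env \<omega> t \<in> A}"
  unfolding env_law_def
  by (subst emeasure_distr) (auto simp: A vimage_def)

lemma eta_emeasure:
  assumes mu: "0 < mu" and A: "A \<in> sets ENV" and inj: "inj e"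
  shows "emeasure (Omega mu p) {\<omega>. (\<lambda>y. edge_state \<omega> (e y) t) \<in> A} = emeasure (pi_p p) A"
proof -
  have "emeasure (Omega mu p) {\<omega>. (\<lambda>y. edge_state \<omega> (e y) t) \<in> A} =
      emeasure (distr (Omega mu p) ENV (\<lambda>\<omega>. \<lambda>y. edge_state \<omega> (e y) t)) A"
    by (subst emeasure_distr) (auto simp: A vimage_def)
  also have "\<dots> = emeasure (pi_p p) A" by (simp add: eta_law[OF mu inj])
  finally show ?thesis .
qed

lemma env_null:
  assumes mu: "0 < mu" and A: "A \<in> sets ENV" and A0: "emeasure (pi_p p) A = 0"
  shows "emeasure (Omega mu p) {\<omega>. env \<omega> t \<in> A} = 0"
proof -
  have N: "{\<omega>. (\<lambda>y. edge_state \<omega> (k + y) t) \<in> A} \<in> null_sets (Omega mu p)" for k :: int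
  proof -
    have "inj (\<lambda>y::int. k + y)" by (auto simp: inj_def)
    from eta_emeasure[OF mu A this] A0
    have "emeasure (Omega mu p) {\<omega>. (\<lambda>y. edge_state \<omega> (k + y) t) \<in> A} = 0" by simp
    moreover have "{\<omega>. (\<lambda>y. edge_state \<omega> (k + y) t) \<in> A} \<in> sets (Omega mu p)"
      using meas_eta_set[OF A, where e="\<lambda>y. k + y" and t=t and mu=mu and p=p] by (intro sets_Omega_Collect)
    ultimately show ?thesis by (simp add: null_sets_def)
  qed
  have "(\<Union>k. {\<omega>. (\<lambda>y. edge_state \<omega> (k + y) t) \<in> A}) \<in> null_sets (Omega mu p)"
    using N by (intro null_sets_UN) auto
  moreover have "{\<omega>. env \<omega> t \<in> A} \<subseteq> (\<Union>k. {\<omega>. (\<lambda>y. edge_state \<omega> (k + y) t) \<in> A})"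
    unfolding env_def by auto
  moreover have "{\<omega>. env \<omega> t \<in> A} \<in> sets (Omega mu p)"
    using meas_env_set[OF A] by (intro sets_Omega_Collect)
  ultimately have "{\<omega>. env \<omega> t \<in> A} \<in> null_sets (Omega mu p)"
    using null_sets_subset by blast
  then show ?thesis by (rule null_setsD1)
qed

lemma ring_time_ge:
  assumes "\<forall>k. 1 \<le> k \<longrightarrow> 0 \<le> \<omega> (Ring k)"
  shows "\<omega> (Ring 0) \<le> ring_time \<omega> n"
proof -
  have "ring_time \<omega> n = \<omega> (Ring 0) + (\<Sum>k\<in>{1..n}. \<omega> (Ring k))"
    unfolding ring_time_def by (induction n) auto
  moreover have "0 \<le> (\<Sum>k\<in>{1..n}. \<omega> (Ring k))"
    using assms by (intro sum_nonneg) auto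
  ultimately show ?thesis by simp
qed

lemma env_lower:
  assumes mu: "0 < mu" and A: "A \<in> sets ENV" and t: "0 \<le> t"
  shows "ennreal (exp (- t)) * emeasure (pi_p p) A \<le> emeasure (Omega mu p) {\<omega>. env \<omega> t \<in> A}"
proof -
  define G where "G = (\<lambda>\<omega>. (\<forall>k. 1 \<le> k \<longrightarrow> 0 \<le> \<omega> (Ring k)) \<and> (\<lambda>y. edge_state \<omega> y t) \<in> A)"
  have [measurable]: "Measurable.pred (Omega mu p) (\<lambda>\<omega>. (\<lambda>y. edge_state \<omega> y t) \<in> A)"
    using meas_eta_set[OF A, where e="\<lambda>y. y"] by simp
  have [measurable]: "Measurable.pred (Omega mu p) G"
    unfolding G_def by measurable
  have inv: "G (fun_upd \<omega> (Ring 0) v) = G \<omega>" for \<omega> v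
  proof -
    have "edge_state (fun_upd \<omega> (Ring 0) v) x t = edge_state \<omega> x t" for x
      by (rule edge_state_upd) auto
    then show ?thesis unfolding G_def by auto
  qed
  have "emeasure (Omega mu p) {\<omega>. G \<omega> \<and> \<omega> (Ring 0) \<in> {t<..}} =
      emeasure (Omega mu p) {\<omega>. G \<omega>} * emeasure (src_dist mu p (Ring 0)) {t<..}"
    by (rule indep_coord_set[OF mu _ _ inv]) auto
  also have "emeasure (src_dist mu p (Ring 0)) {t<..} = ennreal (exp (- t))"
    using expo_gt[of 1 t] t by (simp add: src_dist_def)
  also have "emeasure (Omega mu p) {\<omega>. G \<omega>} = emeasure (pi_p p) A"
  proof -
    have "emeasure (Omega mu p) {\<omega>. G \<omega>} = emeasure (Omega mu p) {\<omega>. (\<lambda>y. edge_state \<omega> y t) \<in> A}"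
    proof (rule emeasure_eq_AE)
      show "AE \<omega> in Omega mu p. (\<omega> \<in> {\<omega>. G \<omega>}) = (\<omega> \<in> {\<omega>. (\<lambda>y. edge_state \<omega> y t) \<in> A})"
        using AE_Ring_nonneg[OF mu, of p] unfolding G_def by eventually_elim auto
    qed (auto intro!: sets_Omega_Collect)
    also have "\<dots> = emeasure (pi_p p) A"
      using eta_emeasure[OF mu A, where e="\<lambda>y. y"] by simp
    finally show ?thesis .
  qed
  finally have eqS: "emeasure (Omega mu p) {\<omega>. G \<omega> \<and> \<omega> (Ring 0) \<in> {t<..}} = emeasure (pi_p p) A * ennreal (exp (- t))" .
  have "{\<omega>. G \<omega> \<and> \<omega> (Ring 0) \<in> {t<..}} \<subseteq> {\<omega>. env \<omega> t \<in> A}"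
  proof (rule subsetI)
    fix \<omega> assume "\<omega> \<in> {\<omega>. G \<omega> \<and> \<omega> (Ring 0) \<in> {t<..}}"
    then have g: "G \<omega>" and r: "\<omega> (Ring 0) \<in> {t<..}" by auto
    have "t < ring_time \<omega> n" for n
      using ring_time_ge[of \<omega> n] g r unfolding G_def by auto
    then have "{n. ring_time \<omega> n \<le> t} = {}"
      by (auto simp: not_le)
    then have "walker_pos \<omega> t = 0" unfolding walker_pos_def by simp
    then show "\<omega> \<in> {\<omega>. env \<omega> t \<in> A}" using g unfolding G_def env_def by simp
  qed
  then have "emeasure (Omega mu p) {\<omega>. G \<omega> \<and> \<omega> (Ring 0) \<in> {t<..}} \<le> emeasure (Omega mu p) {\<omega>. env \<omega> t \<in> A}"
    by (rule emeasure_mono[OF _ sets_Omega_Collect[OF meas_env_set[OF A]]])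
  then show ?thesis using eqS by (simp add: mult.commute)
qed


primrec Dk :: "(src \<Rightarrow> real) \<Rightarrow> nat \<Rightarrow> real" where
  "Dk \<omega> 0 = max 0 (\<omega> (Life 0))"
| "Dk \<omega> (Suc k) = max (Dk \<omega> k - \<omega> (Ring (Suc k))) (max 0 (\<omega> (Life (Suc k))))"

primrec alive :: "(src \<Rightarrow> real) \<Rightarrow> nat \<Rightarrow> bool" where
  "alive \<omega> 0 = True"
| "alive \<omega> (Suc k) = (alive \<omega> k \<and> \<omega> (Ring (Suc k)) \<le> Dk \<omega> k)"

definition Good :: "(src \<Rightarrow> real) \<Rightarrow> bool" where
  "Good \<omega> = ((\<forall>k. 0 < \<omega> (Ring k)) \<and> (\<forall>k. 0 < \<omega> (Life k)) \<and> (\<exists>n. \<not> alive \<omega> n))"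

definition nstop :: "(src \<Rightarrow> real) \<Rightarrow> nat" where
  "nstop \<omega> = (LEAST n. \<not> alive \<omega> (Suc n))"

definition tau' :: "(src \<Rightarrow> real) \<Rightarrow> real" where
  "tau' \<omega> = ring_time \<omega> (nstop \<omega>) + Dk \<omega> (nstop \<omega>)"

lemma ring_time_Suc: "ring_time \<omega> (Suc k) = ring_time \<omega> k + \<omega> (Ring (Suc k))"
  unfolding ring_time_def by simp

lemma ring_time_0: "ring_time \<omega> 0 = \<omega> (Ring 0)"
  unfolding ring_time_def by simp

lemma Dk_nonneg: "0 \<le> Dk \<omega> k"
  by (induction k) auto

lemma alive_mono: "alive \<omega> k \<Longrightarrow> j \<le> k \<Longrightarrow> alive \<omega> j"
proof (induction k arbitrary: j)
  case 0 then show ?case by simp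
next
  case (Suc k) then show ?case by (cases "j = Suc k") auto
qed

lemma m_Suc: "ring_time \<omega> (Suc k) + Dk \<omega> (Suc k) =
   max (ring_time \<omega> k + Dk \<omega> k) (ring_time \<omega> (Suc k) + max 0 (\<omega> (Life (Suc k))))"
  by (simp add: ring_time_Suc max_add_distrib_left)

lemma m_ge: "j \<le> k \<Longrightarrow> ring_time \<omega> j + max 0 (\<omega> (Life j)) \<le> ring_time \<omega> k + Dk \<omega> k"
proof (induction k)
  case 0 then show ?case by simp
next
  case (Suc k)
  note e = m_Suc[of \<omega> k]
  show ?case
  proof (cases "j = Suc k")
    case True then show ?thesis unfolding e by (simp add: le_max_iff_disj)
  next
    case False then have "j \<le> k" using Suc.prems by simp
    then show ?thesis using Suc.IH unfolding e by (simp add: le_max_iff_disj)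
  qed
qed

lemma ring_time_mono:
  assumes "\<forall>k. 0 < \<omega> (Ring k)" "i < j"
  shows "ring_time \<omega> i < ring_time \<omega> j"
  using assms(2)
proof (induction j)
  case 0 then show ?case by simp
next
  case (Suc j)
  have "ring_time \<omega> j < ring_time \<omega> (Suc j)" using assms(1) by (simp add: ring_time_Suc)
  with Suc show ?case by (cases "i = j") auto
qed

lemma ring_time_mono_le:
  assumes "\<forall>k. 0 < \<omega> (Ring k)" "i \<le> j"
  shows "ring_time \<omega> i \<le> ring_time \<omega> j"
  using ring_time_mono[OF assms(1)] assms(2) by (cases "i = j") (auto simp: less_imp_le)

lemma tau1_eq:
  assumes G: "Good \<omega>"
  shows "tau1 \<omega> = tau' \<omega>"
proof -
  have R: "\<forall>k. 0 < \<omega> (Ring k)" and L: "\<forall>k. 0 < \<omega> (Life k)" and ex: "\<exists>n. \<not> alive \<omega> n"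
    using G unfolding Good_def by auto
  have ex': "\<exists>n. \<not> alive \<omega> (Suc n)"
  proof -
    obtain n where "\<not> alive \<omega> n" using ex by auto
    then show ?thesis by (cases n) auto
  qed
  define n where "n = nstop \<omega>"
  have nS: "\<not> alive \<omega> (Suc n)" unfolding n_def nstop_def by (rule LeastI_ex[OF ex'])
  have an: "alive \<omega> n"
  proof (cases n)
    case 0 then show ?thesis by simp
  next
    case (Suc n')
    have "\<not> (\<not> alive \<omega> (Suc n'))"
      using not_less_Least[of n' "\<lambda>n. \<not> alive \<omega> (Suc n)"] Suc unfolding n_def nstop_def by auto
    then show ?thesis using Suc by simp
  qed
  define m where "m = (\<lambda>k. ring_time \<omega> k + Dk \<omega> k)"
  have gap: "m n < ring_time \<omega> (Suc n)"
    using nS an unfolding m_def by (auto simp: ring_time_Suc)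
  have mL: "ring_time \<omega> j + \<omega> (Life j) \<le> m k" if "j \<le> k" for j k
    using m_ge[OF that, of \<omega>] L unfolding m_def by (auto simp: max_def split: if_splits)
  have aliveB: "ring_time \<omega> (Suc j) \<le> m j" if "j < n" for j
  proof -
    have "alive \<omega> (Suc j)" using alive_mono[OF an, of "Suc j"] that by simp
    then show ?thesis unfolding m_def by (auto simp: ring_time_Suc)
  qed
  define T where "T = {t. 0 < t \<and> \<not> infected \<omega> t \<and> (\<exists>t'<t. infected \<omega> t')}"
  have R0: "0 < ring_time \<omega> 0" using R by (simp add: ring_time_0)
  have inT: "m n \<in> T"
  proof -
    have pos: "ring_time \<omega> 0 + \<omega> (Life 0) \<le> m n" using mL[of 0 n] by simp
    have "0 < m n" using pos R0 L by (smt (verit))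
    moreover have "\<not> infected \<omega> (m n)"
    proof
      assume "infected \<omega> (m n)"
      then obtain i where i: "ring_time \<omega> i \<le> m n" "m n < ring_time \<omega> i + \<omega> (Life i)"
        unfolding infected_def by auto
      show False
      proof (cases "i \<le> n")
        case True then show False using mL[OF True] i by simp
      next
        case False
        then have "ring_time \<omega> (Suc n) \<le> ring_time \<omega> i" by (intro ring_time_mono_le[OF R]) auto
        then show False using gap i by simp
      qed
    qed
    moreover have "infected \<omega> (ring_time \<omega> 0)" unfolding infected_def using L
      by (intro exI[of _ 0]) auto
    moreover have "ring_time \<omega> 0 < m n" using pos L by (smt (verit))
    ultimately show ?thesis unfolding T_def by auto
  qed
  have lower: "m n \<le> t" if t: "t \<in> T" for t
  proof (rule ccontr)
    assume "\<not> m n \<le> t"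
    then have tl: "t < m n" by simp
    from t obtain t' i where t': "t' < t" "ring_time \<omega> i \<le> t'" and ni: "\<not> infected \<omega> t"
      unfolding T_def infected_def by auto
    have R0t: "ring_time \<omega> 0 \<le> t"
      using ring_time_mono_le[OF R, of 0 i] t' by simp
    have "k \<le> n \<Longrightarrow> m k \<le> t" for k
    proof (induction k)
      case 0
      have "\<not> (ring_time \<omega> 0 \<le> t \<and> t < ring_time \<omega> 0 + \<omega> (Life 0))"
        using ni unfolding infected_def by blast
      then show ?case using R0t L unfolding m_def by (simp add: max_def)
    next
      case (Suc k)
      then have mk: "m k \<le> t" by simp
      have "ring_time \<omega> (Suc k) \<le> t" using aliveB[of k] Suc.prems mk by simp
      moreover have "\<not> (ring_time \<omega> (Suc k) \<le> t \<and> t < ring_time \<omega> (Suc k) + \<omega> (Life (Suc k)))"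
        using ni unfolding infected_def by blast
      ultimately have "ring_time \<omega> (Suc k) + \<omega> (Life (Suc k)) \<le> t" by simp
      then show ?case using mk L[rule_format, of "Suc k"] unfolding m_def
        by (simp only: m_Suc)
    qed
    then have "m n \<le> t" by simp
    with tl show False by simp
  qed
  have "tau1 \<omega> = m n"
    unfolding tau1_def T_def[symmetric] by (rule cInf_eq_minimum[OF inT lower])
  then show ?thesis unfolding tau'_def m_def n_def .
qed


lemma expo_exp_moment:
  assumes l: "0 < l" and c: "c < l"
  shows "(\<integral>\<^sup>+x. ennreal (exp (c * x)) \<partial>expo l) = ennreal (l / (l - c))"
proof -
  have lc: "0 < l - c" using c by simp
  interpret P: prob_space "density lborel (exponential_density (l - c))"
    by (rule prob_space_exponential_density[OF lc])
  have "(\<integral>\<^sup>+x. ennreal (exp (c * x)) \<partial>expo l) =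
      (\<integral>\<^sup>+x. ennreal (exponential_density l x) * ennreal (exp (c * x)) \<partial>lborel)"
    unfolding expo_def by (rule nn_integral_density) auto
  also have "\<dots> = (\<integral>\<^sup>+x. ennreal (l / (l - c)) * ennreal (exponential_density (l - c) x) \<partial>lborel)"
  proof (rule nn_integral_cong)
    fix x :: real
    have "exponential_density l x * exp (c * x) = (l / (l - c)) * exponential_density (l - c) x"
      using lc by (auto simp: exponential_density_def field_simps exp_add[symmetric] algebra_simps)
    then show "ennreal (exponential_density l x) * ennreal (exp (c * x)) =
        ennreal (l / (l - c)) * ennreal (exponential_density (l - c) x)"
      using l lc by (simp add: ennreal_mult'[symmetric] exponential_density_nonneg)
  qed
  also have "\<dots> = ennreal (l / (l - c)) * (\<integral>\<^sup>+x. ennreal (exponential_density (l - c) x) \<partial>lborel)"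
    by (rule nn_integral_cmult) auto
  also have "(\<integral>\<^sup>+x. ennreal (exponential_density (l - c) x) \<partial>lborel) = 1"
    using P.emeasure_space_1 by (simp add: emeasure_density)
  finally show ?thesis by simp
qed

lemma expo_le:
  assumes l: "0 < l" and a: "0 \<le> a"
  shows "emeasure (expo l) {..a} = ennreal (1 - exp (- a * l))"
proof -
  interpret prob_space "expo l" by (rule prob_expo[OF l])
  have D: "distributed (expo l) lborel (\<lambda>x. x) (exponential_density l)"
    unfolding distributed_def expo_def by (auto simp: distr_id2)
  have "\<P>(x in expo l. x \<le> a) = 1 - exp (- a * l)"
    by (rule exponential_distributedD_le[OF D a l])
  moreover have "{x \<in> space (expo l). x \<le> a} = {..a}"
    by (auto simp: expo_def)
  ultimately show ?thesis
    by (simp add: emeasure_eq_measure)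
qed

lemma AE_expo_pos: "AE x in expo l. 0 < x"
proof -
  have "AE x in lborel. x \<noteq> 0" by (rule AE_lborel_singleton)
  then show ?thesis
    unfolding expo_def by (subst AE_density) (auto simp: exponential_density_def elim: AE_mp)
qed

lemma meas_Dk[measurable]: "(\<lambda>\<omega>. Dk \<omega> k) \<in> borel_measurable (Omega mu p)"
  by (induction k) auto

lemma meas_alive[measurable]: "Measurable.pred (Omega mu p) (\<lambda>\<omega>. alive \<omega> k)"
proof (induction k)
  case 0 then show ?case by simp
next
  case (Suc k)
  note [measurable] = Suc.IH
  have [measurable]: "Measurable.pred (Omega mu p) (\<lambda>\<omega>. \<omega> (Ring (Suc k)) \<le> Dk \<omega> k)"
    unfolding pred_def using borel_measurable_le[OF meas_coord meas_Dk] by simp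
  show ?case unfolding alive.simps by measurable
qed

lemma meas_nstop[measurable]: "nstop \<in> measurable (Omega mu p) (count_space UNIV)"
  unfolding nstop_def by measurable

lemma meas_tau'[measurable]: "tau' \<in> borel_measurable (Omega mu p)"
proof -
  have "(\<lambda>\<omega>. (\<lambda>n \<omega>. ring_time \<omega> n + Dk \<omega> n) (nstop \<omega>) \<omega>) \<in> borel_measurable (Omega mu p)"
    by (rule measurable_compose_countable'[OF _ meas_nstop]) auto
  then show ?thesis unfolding tau'_def by simp
qed

lemma Dk_upd: "\<forall>j\<le>k. i \<noteq> Ring j \<and> i \<noteq> Life j \<Longrightarrow> Dk (fun_upd \<omega> i v) k = Dk \<omega> k"
proof (induction k)
  case 0 then show ?case by auto
next
  case (Suc k)
  have "\<forall>j\<le>k. i \<noteq> Ring j \<and> i \<noteq> Life j" using Suc.prems by simp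
  then have ih: "Dk (fun_upd \<omega> i v) k = Dk \<omega> k" by (rule Suc.IH)
  have a: "Ring (Suc k) \<noteq> i" "Life (Suc k) \<noteq> i" using Suc.prems by auto
  show ?case by (simp only: Dk.simps ih fun_upd_other[OF a(1)] fun_upd_other[OF a(2)])
qed

lemma alive_upd: "\<forall>j\<le>k. i \<noteq> Ring j \<and> i \<noteq> Life j \<Longrightarrow> alive (fun_upd \<omega> i v) k = alive \<omega> k"
proof (induction k)
  case 0 then show ?case by simp
next
  case (Suc k)
  have h: "\<forall>j\<le>k. i \<noteq> Ring j \<and> i \<noteq> Life j" using Suc.prems by simp
  then have ih: "alive (fun_upd \<omega> i v) k = alive \<omega> k" by (rule Suc.IH)
  have d: "Dk (fun_upd \<omega> i v) k = Dk \<omega> k" by (rule Dk_upd[OF h])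
  have a: "Ring (Suc k) \<noteq> i" using Suc.prems by auto
  show ?case by (simp only: alive.simps ih d fun_upd_other[OF a])
qed


lemma lyap_params:
  fixes \<theta> \<beta> :: real
  assumes th: "0 < \<theta>" and b0: "0 < \<beta>" and b1: "\<beta> < 1"
  obtains a \<rho> where "0 < a" "0 < \<rho>" "\<rho> < 1"
    "\<And>d. 0 \<le> d \<Longrightarrow> (a + 3) * (1 - exp (- d)) + \<beta> * exp (\<theta> * d) \<le> \<rho> * (a + exp (\<theta> * d))"
proof -
  define \<gamma> where "\<gamma> = (1 - \<beta>) / 2"
  have g0: "0 < \<gamma>" "\<gamma> < 1/2" using b0 b1 by (auto simp: \<gamma>_def)
  define d0 where "d0 = max 0 (ln (4 / \<gamma>) / \<theta>)"
  have d0: "0 \<le> d0" unfolding d0_def by simp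
  have ed0: "4 / \<gamma> \<le> exp (\<theta> * d0)"
  proof -
    have "ln (4 / \<gamma>) \<le> \<theta> * d0" using th unfolding d0_def
      by (simp add: field_simps max_def)
    then have "exp (ln (4 / \<gamma>)) \<le> exp (\<theta> * d0)" by simp
    then show ?thesis using g0 by simp
  qed
  define \<delta> where "\<delta> = min \<gamma> (exp (- d0) / 4)"
  have dl0: "0 < \<delta>" using g0 unfolding \<delta>_def by simp
  have dlg: "\<delta> \<le> \<gamma>" unfolding \<delta>_def by simp
  have dle: "\<delta> \<le> exp (- d0) / 4" unfolding \<delta>_def by simp
  define a where "a = 1 / \<delta>"
  define \<rho> where "\<rho> = 1 - \<delta>"
  have a0: "0 < a" using dl0 by (simp add: a_def)
  have da: "\<delta> * a = 1" using dl0 by (simp add: a_def)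
  have r0: "0 < \<rho>" "\<rho> < 1" using dlg g0 dl0 by (auto simp: \<rho>_def)
  have main: "(a + 3) * (1 - exp (- d)) + \<beta> * exp (\<theta> * d) \<le> \<rho> * (a + exp (\<theta> * d))" if d: "0 \<le> d" for d
  proof -
    define E where "E = exp (\<theta> * d)"
    have E0: "0 < E" by (simp add: E_def)
    have coef: "\<beta> - 1 + \<delta> \<le> - \<gamma>" using dlg unfolding \<gamma>_def by (simp add: divide_simps)
    have "(a + 3) * (1 - exp (- d)) + \<beta> * E - \<rho> * (a + E) = 4 - (a + 3) * exp (- d) + (\<beta> - 1 + \<delta>) * E"
      using da by (simp add: \<rho>_def algebra_simps)
    also have "\<dots> \<le> 4 - (a + 3) * exp (- d) - \<gamma> * E"
      using mult_right_mono[OF coef, of E] E0 by simp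
    also have "\<dots> \<le> 0"
    proof (cases "d0 \<le> d")
      case True
      then have "exp (\<theta> * d0) \<le> E" unfolding E_def using th by simp
      then have "4 / \<gamma> \<le> E" using ed0 by simp
      then have "4 \<le> \<gamma> * E" using g0 by (simp add: field_simps)
      moreover have "0 \<le> (a + 3) * exp (- d)" using a0 by simp
      ultimately show ?thesis by simp
    next
      case False
      then have "exp (- d0) \<le> exp (- d)" by simp
      then have "a * exp (- d0) \<le> (a + 3) * exp (- d)"
        using a0 by (intro mult_mono) auto
      moreover have "4 \<le> a * exp (- d0)"
      proof -
        have "4 * \<delta> \<le> exp (- d0)" using dle by simp
        then have "4 * \<delta> * a \<le> exp (- d0) * a" using a0 by (intro mult_right_mono) auto
        then show ?thesis using da by (simp add: algebra_simps)
      qed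
      moreover have "0 \<le> \<gamma> * E" using g0 E0 by simp
      ultimately show ?thesis by simp
    qed
    finally show ?thesis unfolding E_def by simp
  qed
  show ?thesis using that[OF a0 r0 main] .
qed


lemma exp_max_le: "exp (t * max x y) \<le> exp (t * x) + exp (t * y)" if "0 \<le> t" for t x y :: real
  using that by (cases "x \<le> y") (auto simp: max_def mult_left_mono add_nonneg_nonneg less_imp_le
      intro: add_increasing add_increasing2)

lemma W_step:
  fixes mu p a \<rho> :: real
  assumes mu: "0 < mu" and a0: "0 < a" and r0: "0 < \<rho>"
    and ineq: "\<And>d. 0 \<le> d \<Longrightarrow> (a + 3) * (1 - exp (- d)) + (1 / (1 + mu / 2)) * exp (mu / 2 * d) \<le> \<rho> * (a + exp (mu / 2 * d))"
  shows "(\<integral>\<^sup>+\<omega>. ennreal (a + exp (mu / 2 * Dk \<omega> (Suc k))) * indicator {\<omega>. alive \<omega> (Suc k)} \<omega> \<partial>Omega mu p)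
     \<le> ennreal \<rho> * (\<integral>\<^sup>+\<omega>. ennreal (a + exp (mu / 2 * Dk \<omega> k)) * indicator {\<omega>. alive \<omega> k} \<omega> \<partial>Omega mu p)"
proof -
  define \<theta> where "\<theta> = mu / 2"
  have th: "0 < \<theta>" using mu by (simp add: \<theta>_def)
  define I where "I = (\<lambda>\<omega>. indicator {\<omega>. alive \<omega> k} \<omega> :: ennreal)"
  define G where "G = (\<lambda>\<omega>::src \<Rightarrow> real. \<omega> (Ring (Suc k)))"
  define L where "L = (\<lambda>\<omega>::src \<Rightarrow> real. \<omega> (Life (Suc k)))"
  define D where "D = (\<lambda>\<omega>. Dk \<omega> k)"
  have [measurable]: "I \<in> borel_measurable (Omega mu p)" unfolding I_def
    using meas_alive[where mu=mu and p=p and k=k] by (simp add: pred_def)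
  have [measurable]: "G \<in> borel_measurable (Omega mu p)" "L \<in> borel_measurable (Omega mu p)"
    "D \<in> borel_measurable (Omega mu p)" unfolding G_def L_def D_def by measurable
  have Dnn: "0 \<le> D \<omega>" for \<omega> unfolding D_def by (rule Dk_nonneg)
  have [measurable]: "Measurable.pred (Omega mu p) (\<lambda>\<omega>. G \<omega> \<le> D \<omega>)"
    unfolding pred_def using borel_measurable_le[of G "Omega mu p" D] by simp
  define H1 where "H1 = (\<lambda>\<omega>. (I \<omega> * indicator {\<omega>. G \<omega> \<le> D \<omega>} \<omega>) * ennreal (a + 1 + exp (\<theta> * L \<omega>)))"
  define H2 where "H2 = (\<lambda>\<omega>. (I \<omega> * ennreal (exp (\<theta> * D \<omega>))) * ennreal (exp ((- \<theta>) * G \<omega>)))"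
  have [measurable]: "H1 \<in> borel_measurable (Omega mu p)" "H2 \<in> borel_measurable (Omega mu p)"
    unfolding H1_def H2_def by measurable
  have step1: "ennreal (a + exp (\<theta> * Dk \<omega> (Suc k))) * indicator {\<omega>. alive \<omega> (Suc k)} \<omega> \<le> H1 \<omega> + H2 \<omega>" for \<omega>
  proof (cases "alive \<omega> (Suc k)")
    case False then show ?thesis by simp
  next
    case True
    then have al: "alive \<omega> k" and gd: "G \<omega> \<le> D \<omega>" by (auto simp: G_def D_def)
    have e1: "exp (\<theta> * max (D \<omega> - G \<omega>) (max 0 (L \<omega>))) \<le> exp (\<theta> * (D \<omega> - G \<omega>)) + exp (\<theta> * max 0 (L \<omega>))"
      using th by (intro exp_max_le) simp
    have e2: "exp (\<theta> * max 0 (L \<omega>)) \<le> exp (\<theta> * 0) + exp (\<theta> * L \<omega>)"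
      using th by (intro exp_max_le) simp
    have e3: "exp (\<theta> * (D \<omega> - G \<omega>)) = exp (\<theta> * D \<omega>) * exp ((- \<theta>) * G \<omega>)"
      by (simp add: exp_add[symmetric] algebra_simps)
    have "a + exp (\<theta> * Dk \<omega> (Suc k)) \<le> (a + 1 + exp (\<theta> * L \<omega>)) + exp (\<theta> * D \<omega>) * exp ((- \<theta>) * G \<omega>)"
      using e1 e2 e3 by (simp add: D_def G_def L_def)
    then have "ennreal (a + exp (\<theta> * Dk \<omega> (Suc k))) \<le> ennreal ((a + 1 + exp (\<theta> * L \<omega>)) + exp (\<theta> * D \<omega>) * exp ((- \<theta>) * G \<omega>))"
      by (rule ennreal_leI)
    also have "\<dots> = ennreal (a + 1 + exp (\<theta> * L \<omega>)) + ennreal (exp (\<theta> * D \<omega>)) * ennreal (exp ((- \<theta>) * G \<omega>))"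
      using a0 by (simp add: ennreal_plus[symmetric] ennreal_mult[symmetric] add_nonneg_nonneg)
    finally show ?thesis using True al gd by (simp add: H1_def H2_def I_def)
  qed
  have "(\<integral>\<^sup>+\<omega>. ennreal (a + exp (mu / 2 * Dk \<omega> (Suc k))) * indicator {\<omega>. alive \<omega> (Suc k)} \<omega> \<partial>Omega mu p)
      \<le> (\<integral>\<^sup>+\<omega>. H1 \<omega> + H2 \<omega> \<partial>Omega mu p)"
    using step1 by (intro nn_integral_mono) (simp add: \<theta>_def)
  also have "\<dots> = (\<integral>\<^sup>+\<omega>. H1 \<omega> \<partial>Omega mu p) + (\<integral>\<^sup>+\<omega>. H2 \<omega> \<partial>Omega mu p)"
    by (rule nn_integral_add) auto
  finally have S1: "(\<integral>\<^sup>+\<omega>. ennreal (a + exp (mu / 2 * Dk \<omega> (Suc k))) * indicator {\<omega>. alive \<omega> (Suc k)} \<omega> \<partial>Omega mu p)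
      \<le> (\<integral>\<^sup>+\<omega>. H1 \<omega> \<partial>Omega mu p) + (\<integral>\<^sup>+\<omega>. H2 \<omega> \<partial>Omega mu p)" .
  have invL: "I (fun_upd \<omega> (Life (Suc k)) v) = I \<omega> \<and> G (fun_upd \<omega> (Life (Suc k)) v) = G \<omega> \<and> D (fun_upd \<omega> (Life (Suc k)) v) = D \<omega>" for \<omega> v
  proof -
    have "alive (fun_upd \<omega> (Life (Suc k)) v) k = alive \<omega> k" by (rule alive_upd) auto
    moreover have "Dk (fun_upd \<omega> (Life (Suc k)) v) k = Dk \<omega> k" by (rule Dk_upd) auto
    moreover have "(fun_upd \<omega> (Life (Suc k)) v) (Ring (Suc k)) = \<omega> (Ring (Suc k))" by simp
    ultimately show ?thesis unfolding I_def G_def D_def indicator_def by simp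
  qed
  have invR: "I (fun_upd \<omega> (Ring (Suc k)) v) = I \<omega> \<and> D (fun_upd \<omega> (Ring (Suc k)) v) = D \<omega>" for \<omega> v
  proof -
    have "alive (fun_upd \<omega> (Ring (Suc k)) v) k = alive \<omega> k" by (rule alive_upd) auto
    moreover have "Dk (fun_upd \<omega> (Ring (Suc k)) v) k = Dk \<omega> k" by (rule Dk_upd) auto
    ultimately show ?thesis unfolding I_def D_def indicator_def by simp
  qed
  have "(\<integral>\<^sup>+\<omega>. H1 \<omega> \<partial>Omega mu p) =
      (\<integral>\<^sup>+\<omega>. I \<omega> * indicator {\<omega>. G \<omega> \<le> D \<omega>} \<omega> \<partial>Omega mu p) * (\<integral>\<^sup>+x. ennreal (a + 1 + exp (\<theta> * x)) \<partial>src_dist mu p (Life (Suc k)))"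
    unfolding H1_def L_def
    by (rule indep_coord[OF mu]) (auto simp: invL indicator_def)
  also have "(\<integral>\<^sup>+x. ennreal (a + 1 + exp (\<theta> * x)) \<partial>src_dist mu p (Life (Suc k))) = ennreal (a + 3)"
  proof -
    interpret E: prob_space "expo mu" by (rule prob_expo[OF mu])
    have "(\<integral>\<^sup>+x. ennreal (a + 1 + exp (\<theta> * x)) \<partial>expo mu) =
        (\<integral>\<^sup>+x. ennreal (a + 1) + ennreal (exp (\<theta> * x)) \<partial>expo mu)"
      using a0 by (intro nn_integral_cong) (simp add: ennreal_plus[symmetric])
    also have "\<dots> = (\<integral>\<^sup>+x. ennreal (a + 1) \<partial>expo mu) + (\<integral>\<^sup>+x. ennreal (exp (\<theta> * x)) \<partial>expo mu)"
      by (rule nn_integral_add) (auto simp: expo_def)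
    also have "(\<integral>\<^sup>+x. ennreal (exp (\<theta> * x)) \<partial>expo mu) = ennreal (mu / (mu - \<theta>))"
      using mu by (intro expo_exp_moment) (auto simp: \<theta>_def)
    also have "mu / (mu - \<theta>) = 2" using mu by (simp add: \<theta>_def field_simps)
    also have "(\<integral>\<^sup>+x. ennreal (a + 1) \<partial>expo mu) = ennreal (a + 1)"
      using E.emeasure_space_1 by simp
    finally show ?thesis using a0 by (simp add: ennreal_plus[symmetric])
  qed
  also have "(\<integral>\<^sup>+\<omega>. I \<omega> * indicator {\<omega>. G \<omega> \<le> D \<omega>} \<omega> \<partial>Omega mu p) =
      (\<integral>\<^sup>+\<omega>. (\<integral>\<^sup>+x. I (fun_upd \<omega> (Ring (Suc k)) x) * indicator {\<omega>. G \<omega> \<le> D \<omega>} (fun_upd \<omega> (Ring (Suc k)) x) \<partial>src_dist mu p (Ring (Suc k))) \<partial>Omega mu p)"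
    by (rule resample[OF mu]) measurable
  also have "\<dots> = (\<integral>\<^sup>+\<omega>. I \<omega> * ennreal (1 - exp (- D \<omega>)) \<partial>Omega mu p)"
  proof (rule nn_integral_cong)
    fix \<omega> :: "src \<Rightarrow> real"
    have "(\<integral>\<^sup>+x. I (fun_upd \<omega> (Ring (Suc k)) x) * indicator {\<omega>. G \<omega> \<le> D \<omega>} (fun_upd \<omega> (Ring (Suc k)) x) \<partial>src_dist mu p (Ring (Suc k)))
        = (\<integral>\<^sup>+x. I \<omega> * indicator {..D \<omega>} x \<partial>expo 1)"
      by (subst src_dist_simps(1), intro nn_integral_cong) (simp add: invR G_def indicator_def)
    also have "\<dots> = I \<omega> * emeasure (expo 1) {..D \<omega>}"
      by (rule nn_integral_cmult_indicator) (simp add: expo_def)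
    also have "emeasure (expo 1) {..D \<omega>} = ennreal (1 - exp (- D \<omega>))"
      using expo_le[of 1 "D \<omega>"] Dnn by simp
    finally show "(\<integral>\<^sup>+x. I (fun_upd \<omega> (Ring (Suc k)) x) * indicator {\<omega>. G \<omega> \<le> D \<omega>} (fun_upd \<omega> (Ring (Suc k)) x) \<partial>src_dist mu p (Ring (Suc k)))
        = I \<omega> * ennreal (1 - exp (- D \<omega>))" .
  qed
  finally have S3a: "(\<integral>\<^sup>+\<omega>. H1 \<omega> \<partial>Omega mu p) = (\<integral>\<^sup>+\<omega>. I \<omega> * ennreal (1 - exp (- D \<omega>)) \<partial>Omega mu p) * ennreal (a + 3)" .
  have "(\<integral>\<^sup>+\<omega>. H2 \<omega> \<partial>Omega mu p) =
      (\<integral>\<^sup>+\<omega>. I \<omega> * ennreal (exp (\<theta> * D \<omega>)) \<partial>Omega mu p) * (\<integral>\<^sup>+x. ennreal (exp ((- \<theta>) * x)) \<partial>src_dist mu p (Ring (Suc k)))"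
    unfolding H2_def G_def
    by (rule indep_coord[OF mu]) (auto simp: invR)
  also have "(\<integral>\<^sup>+x. ennreal (exp ((- \<theta>) * x)) \<partial>src_dist mu p (Ring (Suc k))) = ennreal (1 / (1 + \<theta>))"
    using expo_exp_moment[of 1 "- \<theta>"] th by simp
  finally have S3c: "(\<integral>\<^sup>+\<omega>. H2 \<omega> \<partial>Omega mu p) = (\<integral>\<^sup>+\<omega>. I \<omega> * ennreal (exp (\<theta> * D \<omega>)) \<partial>Omega mu p) * ennreal (1 / (1 + \<theta>))" .
  have "(\<integral>\<^sup>+\<omega>. I \<omega> * ennreal (1 - exp (- D \<omega>)) \<partial>Omega mu p) * ennreal (a + 3) +
        (\<integral>\<^sup>+\<omega>. I \<omega> * ennreal (exp (\<theta> * D \<omega>)) \<partial>Omega mu p) * ennreal (1 / (1 + \<theta>)) =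
      (\<integral>\<^sup>+\<omega>. I \<omega> * ennreal (1 - exp (- D \<omega>)) * ennreal (a + 3) \<partial>Omega mu p) +
        (\<integral>\<^sup>+\<omega>. I \<omega> * ennreal (exp (\<theta> * D \<omega>)) * ennreal (1 / (1 + \<theta>)) \<partial>Omega mu p)"
    by (simp add: nn_integral_multc)
  also have "\<dots> = (\<integral>\<^sup>+\<omega>. I \<omega> * ennreal (1 - exp (- D \<omega>)) * ennreal (a + 3) + I \<omega> * ennreal (exp (\<theta> * D \<omega>)) * ennreal (1 / (1 + \<theta>)) \<partial>Omega mu p)"
    by (rule nn_integral_add[symmetric]) auto
  also have "\<dots> \<le> (\<integral>\<^sup>+\<omega>. ennreal \<rho> * (ennreal (a + exp (\<theta> * D \<omega>)) * I \<omega>) \<partial>Omega mu p)"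
  proof (rule nn_integral_mono)
    fix \<omega> :: "src \<Rightarrow> real"
    have d: "0 \<le> D \<omega>" by (rule Dnn)
    have q1: "0 \<le> 1 - exp (- D \<omega>)" using d by simp
    have "ennreal (1 - exp (- D \<omega>)) * ennreal (a + 3) + ennreal (exp (\<theta> * D \<omega>)) * ennreal (1 / (1 + \<theta>))
        = ennreal ((a + 3) * (1 - exp (- D \<omega>)) + (1 / (1 + \<theta>)) * exp (\<theta> * D \<omega>))"
    proof -
      have "ennreal (1 - exp (- D \<omega>)) * ennreal (a + 3) = ennreal ((a + 3) * (1 - exp (- D \<omega>)))"
        using q1 a0 by (subst ennreal_mult[symmetric]) (auto simp: mult.commute)
      moreover have "ennreal (exp (\<theta> * D \<omega>)) * ennreal (1 / (1 + \<theta>)) = ennreal ((1 / (1 + \<theta>)) * exp (\<theta> * D \<omega>))"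
        using th by (subst ennreal_mult[symmetric]) (auto simp: mult.commute)
      moreover have "ennreal ((a + 3) * (1 - exp (- D \<omega>))) + ennreal ((1 / (1 + \<theta>)) * exp (\<theta> * D \<omega>))
          = ennreal ((a + 3) * (1 - exp (- D \<omega>)) + (1 / (1 + \<theta>)) * exp (\<theta> * D \<omega>))"
        using q1 a0 th by (subst ennreal_plus) auto
      ultimately show ?thesis by simp
    qed
    also have "\<dots> \<le> ennreal (\<rho> * (a + exp (\<theta> * D \<omega>)))"
      using ineq[OF d] by (intro ennreal_leI) (simp add: \<theta>_def)
    also have "\<dots> = ennreal \<rho> * ennreal (a + exp (\<theta> * D \<omega>))"
      using r0 a0 by (subst ennreal_mult) auto
    finally have *: "ennreal (1 - exp (- D \<omega>)) * ennreal (a + 3) + ennreal (exp (\<theta> * D \<omega>)) * ennreal (1 / (1 + \<theta>))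
        \<le> ennreal \<rho> * ennreal (a + exp (\<theta> * D \<omega>))" .
    show "I \<omega> * ennreal (1 - exp (- D \<omega>)) * ennreal (a + 3) + I \<omega> * ennreal (exp (\<theta> * D \<omega>)) * ennreal (1 / (1 + \<theta>))
        \<le> ennreal \<rho> * (ennreal (a + exp (\<theta> * D \<omega>)) * I \<omega>)"
      using * by (cases "alive \<omega> k") (simp_all add: I_def mult.assoc)
  qed
  also have "\<dots> = ennreal \<rho> * (\<integral>\<^sup>+\<omega>. ennreal (a + exp (mu / 2 * Dk \<omega> k)) * indicator {\<omega>. alive \<omega> k} \<omega> \<partial>Omega mu p)"
    by (subst nn_integral_cmult) (auto simp: I_def D_def \<theta>_def)
  finally show ?thesis using S1 S3a S3c by simp
qed


lemma h_int:
  assumes mu: "0 < mu" and c: "0 \<le> c"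
  shows "(\<integral>\<^sup>+x. ennreal (c + 1 + exp (mu / 2 * x)) \<partial>expo mu) = ennreal (c + 3)"
proof -
  interpret E: prob_space "expo mu" by (rule prob_expo[OF mu])
  have "(\<integral>\<^sup>+x. ennreal (c + 1 + exp (mu / 2 * x)) \<partial>expo mu) =
      (\<integral>\<^sup>+x. ennreal (c + 1) + ennreal (exp (mu / 2 * x)) \<partial>expo mu)"
    using c by (intro nn_integral_cong) (simp add: ennreal_plus[symmetric])
  also have "\<dots> = (\<integral>\<^sup>+x. ennreal (c + 1) \<partial>expo mu) + (\<integral>\<^sup>+x. ennreal (exp (mu / 2 * x)) \<partial>expo mu)"
    by (rule nn_integral_add) (auto simp: expo_def)
  also have "(\<integral>\<^sup>+x. ennreal (exp (mu / 2 * x)) \<partial>expo mu) = ennreal (mu / (mu - mu / 2))"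
    using mu by (intro expo_exp_moment) auto
  also have "mu / (mu - mu / 2) = 2" using mu by (simp add: field_simps)
  also have "(\<integral>\<^sup>+x. ennreal (c + 1) \<partial>expo mu) = ennreal (c + 1)"
    using E.emeasure_space_1 by simp
  finally show ?thesis using c by (simp add: ennreal_plus[symmetric])
qed

lemma alive_bound:
  assumes mu: "0 < mu"
  obtains C \<rho> where "0 < \<rho>" "\<rho> < 1" "0 \<le> C" "\<And>k. emeasure (Omega mu p) {\<omega>. alive \<omega> k} \<le> ennreal (C * \<rho> ^ k)"
proof -
  have th: "0 < mu / 2" using mu by simp
  have b: "0 < 1 / (1 + mu / 2)" "1 / (1 + mu / 2) < 1" using mu by (auto simp: field_simps)
  obtain a \<rho> where a0: "0 < a" and r0: "0 < \<rho>" "\<rho> < 1" and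
    ineq: "\<And>d. 0 \<le> d \<Longrightarrow> (a + 3) * (1 - exp (- d)) + (1 / (1 + mu / 2)) * exp (mu / 2 * d) \<le> \<rho> * (a + exp (mu / 2 * d))"
    using lyap_params[OF th b] by blast
  define W where "W k = (\<integral>\<^sup>+\<omega>. ennreal (a + exp (mu / 2 * Dk \<omega> k)) * indicator {\<omega>. alive \<omega> k} \<omega> \<partial>Omega mu p)" for k
  have W0: "W 0 \<le> ennreal (a + 3)"
  proof -
    have "W 0 \<le> (\<integral>\<^sup>+\<omega>. 1 * ennreal (a + 1 + exp (mu / 2 * \<omega> (Life 0))) \<partial>Omega mu p)"
      unfolding W_def
    proof (rule nn_integral_mono)
      fix \<omega> :: "src \<Rightarrow> real"
      have "exp (mu / 2 * max 0 (\<omega> (Life 0))) \<le> exp (mu / 2 * 0) + exp (mu / 2 * \<omega> (Life 0))"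
        using th by (intro exp_max_le) simp
      then have "ennreal (a + exp (mu / 2 * Dk \<omega> 0)) \<le> ennreal (a + 1 + exp (mu / 2 * \<omega> (Life 0)))"
        by (intro ennreal_leI) simp
      then show "ennreal (a + exp (mu / 2 * Dk \<omega> 0)) * indicator {\<omega>. alive \<omega> 0} \<omega> \<le> 1 * ennreal (a + 1 + exp (mu / 2 * \<omega> (Life 0)))"
        by simp
    qed
    also have "\<dots> = (\<integral>\<^sup>+\<omega>. 1 \<partial>Omega mu p) * (\<integral>\<^sup>+x. ennreal (a + 1 + exp (mu / 2 * x)) \<partial>src_dist mu p (Life 0))"
      by (rule indep_coord[OF mu]) auto
    also have "(\<integral>\<^sup>+x. ennreal (a + 1 + exp (mu / 2 * x)) \<partial>src_dist mu p (Life 0)) = ennreal (a + 3)"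
      using h_int[OF mu, of a] a0 by simp
    also have "(\<integral>\<^sup>+\<omega>. 1 \<partial>Omega mu p) = 1"
      using prob_space.emeasure_space_1[OF prob_Omega[OF mu, of p]] by simp
    finally show ?thesis by simp
  qed
  have Wk: "W k \<le> ennreal ((a + 3) * \<rho> ^ k)" for k
  proof (induction k)
    case 0 then show ?case using W0 by simp
  next
    case (Suc k)
    have "W (Suc k) \<le> ennreal \<rho> * W k"
      unfolding W_def by (rule W_step[OF mu a0 r0(1) ineq])
    also have "\<dots> \<le> ennreal \<rho> * ennreal ((a + 3) * \<rho> ^ k)"
      using Suc by (intro mult_left_mono) auto
    also have "\<dots> = ennreal ((a + 3) * \<rho> ^ Suc k)"
      using r0 a0 by (subst ennreal_mult[symmetric]) (auto simp: algebra_simps)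
    finally show ?case .
  qed
  have "emeasure (Omega mu p) {\<omega>. alive \<omega> k} \<le> ennreal ((a + 3) / a * \<rho> ^ k)" for k
  proof -
    have "ennreal a * emeasure (Omega mu p) {\<omega>. alive \<omega> k} = (\<integral>\<^sup>+\<omega>. ennreal a * indicator {\<omega>. alive \<omega> k} \<omega> \<partial>Omega mu p)"
      by (subst nn_integral_cmult_indicator) (auto intro: sets_Omega_Collect)
    also have "\<dots> \<le> W k"
      unfolding W_def using a0 by (intro nn_integral_mono) (auto simp: indicator_def intro!: ennreal_leI)
    also have "\<dots> \<le> ennreal ((a + 3) * \<rho> ^ k)" by (rule Wk)
    finally have "ennreal a * emeasure (Omega mu p) {\<omega>. alive \<omega> k} \<le> ennreal ((a + 3) * \<rho> ^ k)" .
    then have "ennreal (1 / a) * (ennreal a * emeasure (Omega mu p) {\<omega>. alive \<omega> k}) \<le> ennreal (1 / a) * ennreal ((a + 3) * \<rho> ^ k)"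
      by (rule mult_left_mono) simp
    moreover have "ennreal (1 / a) * ennreal a = 1"
      using a0 by (subst ennreal_mult[symmetric]) auto
    moreover have "ennreal (1 / a) * ennreal ((a + 3) * \<rho> ^ k) = ennreal ((a + 3) / a * \<rho> ^ k)"
      using a0 r0 by (subst ennreal_mult[symmetric]) auto
    ultimately show ?thesis by (simp add: mult.assoc[symmetric])
  qed
  moreover have "0 \<le> (a + 3) / a" using a0 by simp
  ultimately show ?thesis using that r0 by blast
qed


lemma AE_not_alive:
  assumes mu: "0 < mu"
  shows "AE \<omega> in Omega mu p. \<exists>n. \<not> alive \<omega> n"
proof -
  interpret O: prob_space "Omega mu p" by (rule prob_Omega[OF mu])
  obtain C \<rho> where r: "0 < \<rho>" "\<rho> < 1" and C: "0 \<le> C"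
    and b: "\<And>k. emeasure (Omega mu p) {\<omega>. alive \<omega> k} \<le> ennreal (C * \<rho> ^ k)"
    using alive_bound[OF mu] by blast
  have S: "{\<omega>. \<forall>n. alive \<omega> n} \<in> sets (Omega mu p)"
    by (rule sets_Omega_Collect) measurable
  have le: "measure (Omega mu p) {\<omega>. \<forall>n. alive \<omega> n} \<le> C * \<rho> ^ k" for k
  proof -
    have "emeasure (Omega mu p) {\<omega>. \<forall>n. alive \<omega> n} \<le> emeasure (Omega mu p) {\<omega>. alive \<omega> k}"
      by (rule emeasure_mono) (auto intro: sets_Omega_Collect)
    also have "\<dots> \<le> ennreal (C * \<rho> ^ k)" by (rule b)
    finally show ?thesis using C r by (simp add: O.emeasure_eq_measure)
  qed
  have lim: "(\<lambda>k. C * \<rho> ^ k) \<longlonglongrightarrow> 0"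
    using r by (intro tendsto_mult_right_zero LIMSEQ_power_zero) auto
  have "measure (Omega mu p) {\<omega>. \<forall>n. alive \<omega> n} \<le> 0"
    by (rule LIMSEQ_le_const[OF lim]) (use le in auto)
  then have "emeasure (Omega mu p) {\<omega>. \<forall>n. alive \<omega> n} = 0"
    by (simp add: O.emeasure_eq_measure measure_nonneg antisym)
  then show ?thesis
    by (subst AE_iff_measurable[OF S]) auto
qed

lemma AE_Good:
  assumes mu: "0 < mu"
  shows "AE \<omega> in Omega mu p. Good \<omega>"
proof -
  have "AE \<omega> in Omega mu p. 0 < \<omega> (Ring k)" for k
    unfolding Omega_def
    by (rule AE_PiM_component[where P="\<lambda>x. 0 < x"]) (use AE_expo_pos prob_src[OF mu] in \<open>auto simp del: src_dist_simps\<close>, subst src_dist_simps, rule AE_expo_pos)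
  then have R: "AE \<omega> in Omega mu p. \<forall>k. 0 < \<omega> (Ring k)" by (simp add: AE_all_countable)
  have "AE \<omega> in Omega mu p. 0 < \<omega> (Life k)" for k
    unfolding Omega_def
    by (rule AE_PiM_component[where P="\<lambda>x. 0 < x"]) (use AE_expo_pos prob_src[OF mu] in \<open>auto simp del: src_dist_simps\<close>, subst src_dist_simps, rule AE_expo_pos)
  then have L: "AE \<omega> in Omega mu p. \<forall>k. 0 < \<omega> (Life k)" by (simp add: AE_all_countable)
  show ?thesis using R L AE_not_alive[OF mu, of p] unfolding Good_def by eventually_elim auto
qed

lemma AE_tau1:
  assumes mu: "0 < mu"
  shows "AE \<omega> in Omega mu p. tau1 \<omega> = tau' \<omega>"
  using AE_Good[OF mu, of p] by eventually_elim (rule tau1_eq)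


lemma Good_nstop:
  assumes G: "Good \<omega>"
  shows "alive \<omega> (nstop \<omega>)" "\<not> alive \<omega> (Suc (nstop \<omega>))"
proof -
  have ex: "\<exists>n. \<not> alive \<omega> n" using G unfolding Good_def by auto
  have ex': "\<exists>n. \<not> alive \<omega> (Suc n)"
  proof -
    obtain n where "\<not> alive \<omega> n" using ex by auto
    then show ?thesis by (cases n) auto
  qed
  show nS: "\<not> alive \<omega> (Suc (nstop \<omega>))" unfolding nstop_def by (rule LeastI_ex[OF ex'])
  show "alive \<omega> (nstop \<omega>)"
  proof (cases "nstop \<omega>")
    case 0 then show ?thesis by simp
  next
    case (Suc n')
    have "\<not> (\<not> alive \<omega> (Suc n'))"
      using not_less_Least[of n' "\<lambda>n. \<not> alive \<omega> (Suc n)"] Suc unfolding nstop_def by auto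
    then show ?thesis using Suc by simp
  qed
qed

definition pre :: "nat \<Rightarrow> (src \<Rightarrow> real) \<Rightarrow> bool" where
  "pre j \<omega> = (case j of 0 \<Rightarrow> True | Suc i \<Rightarrow> alive \<omega> i)"

lemma meas_pre[measurable]: "Measurable.pred (Omega mu p) (pre j)"
  unfolding pre_def by (cases j) auto

lemma pre_upd: "pre j (fun_upd \<omega> (Ring j) v) = pre j \<omega>"
  unfolding pre_def by (cases j) (auto intro!: alive_upd)

lemma max_le_exp: "max 0 x \<le> 2 * exp (1 / 2 * x)" for x :: real
proof (cases "x \<le> 0")
  case True then show ?thesis by (simp add: max_def)
next
  case False
  have "1 + x / 2 \<le> exp (x / 2)" by (rule exp_ge_add_one_self)
  then have "x \<le> 2 * exp (x / 2)" by linarith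
  then have "x \<le> 2 * exp (1 / 2 * x)" by simp
  then show ?thesis using False by (simp add: max_def)
qed

lemma E_tau'_finite:
  assumes mu: "0 < mu"
  shows "(\<integral>\<^sup>+\<omega>. ennreal (tau' \<omega>) \<partial>Omega mu p) < \<infinity>"
proof -
  obtain C \<rho> where r: "0 < \<rho>" "\<rho> < 1" and C: "0 \<le> C"
    and b: "\<And>k. emeasure (Omega mu p) {\<omega>. alive \<omega> k} \<le> ennreal (C * \<rho> ^ k)"
    using alive_bound[OF mu] by blast
  define K where "K = 1 + C / \<rho>"
  have K0: "0 \<le> K" using C r by (simp add: K_def)
  have pb: "emeasure (Omega mu p) {\<omega>. pre j \<omega>} \<le> ennreal (K * \<rho> ^ j)" for j
  proof (cases j)
    case 0
    have "emeasure (Omega mu p) {\<omega>. pre j \<omega>} \<le> 1"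
      using prob_space.measure_le_1 prob_space.emeasure_le_1[OF prob_Omega[OF mu]] by blast
    also have "1 \<le> ennreal (K * \<rho> ^ j)" using 0 C r by (simp add: K_def)
    finally show ?thesis .
  next
    case (Suc i)
    have "emeasure (Omega mu p) {\<omega>. pre j \<omega>} = emeasure (Omega mu p) {\<omega>. alive \<omega> i}"
      using Suc by (simp add: pre_def)
    also have "\<dots> \<le> ennreal (C * \<rho> ^ i)" by (rule b)
    also have "C * \<rho> ^ i \<le> K * \<rho> ^ j"
    proof -
      have "C * \<rho> ^ i = (C / \<rho>) * \<rho> ^ j" using Suc r by (simp add: field_simps)
      also have "\<dots> \<le> K * \<rho> ^ j" using r C by (intro mult_right_mono) (auto simp: K_def)
      finally show ?thesis .
    qed
    finally show ?thesis by (simp add: ennreal_leI)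
  qed
  define U where "U = (\<lambda>\<omega>. \<Sum>j. ennreal (max 0 (\<omega> (Ring j))) * indicator {\<omega>. pre j \<omega>} \<omega>)"
  have pt: "ennreal (tau' \<omega>) \<le> U \<omega>" if G: "Good \<omega>" for \<omega>
  proof -
    define n where "n = nstop \<omega>"
    have an: "alive \<omega> n" and nS: "\<not> alive \<omega> (Suc n)" using Good_nstop[OF G] by (auto simp: n_def)
    have R: "\<forall>k. 0 < \<omega> (Ring k)" using G by (simp add: Good_def)
    have "tau' \<omega> \<le> ring_time \<omega> (Suc n)"
      using nS an unfolding tau'_def n_def[symmetric] by (simp add: ring_time_Suc)
    also have "ring_time \<omega> (Suc n) = (\<Sum>j\<in>{..Suc n}. max 0 (\<omega> (Ring j)))"
      unfolding ring_time_def using R by (intro sum.cong) (auto simp: max_def less_imp_le)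
    finally have "ennreal (tau' \<omega>) \<le> ennreal (\<Sum>j\<in>{..Suc n}. max 0 (\<omega> (Ring j)))"
      by (rule ennreal_leI)
    also have "\<dots> = (\<Sum>j\<in>{..Suc n}. ennreal (max 0 (\<omega> (Ring j))))"
      by (rule sum_ennreal[symmetric]) simp
    also have "\<dots> = (\<Sum>j\<in>{..Suc n}. ennreal (max 0 (\<omega> (Ring j))) * indicator {\<omega>. pre j \<omega>} \<omega>)"
    proof (rule sum.cong)
      fix j assume "j \<in> {..Suc n}"
      then have "pre j \<omega>" unfolding pre_def using alive_mono[OF an] by (cases j) auto
      then show "ennreal (max 0 (\<omega> (Ring j))) = ennreal (max 0 (\<omega> (Ring j))) * indicator {\<omega>. pre j \<omega>} \<omega>"
        by simp
    qed simp
    also have "\<dots> \<le> U \<omega>"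
      unfolding U_def by (rule sum_le_suminf) auto
    finally show ?thesis .
  qed
  have "(\<integral>\<^sup>+\<omega>. ennreal (tau' \<omega>) \<partial>Omega mu p) \<le> (\<integral>\<^sup>+\<omega>. U \<omega> \<partial>Omega mu p)"
    using AE_Good[OF mu, of p] pt by (intro nn_integral_mono_AE) (auto elim: AE_mp)
  also have "\<dots> = (\<Sum>j. \<integral>\<^sup>+\<omega>. ennreal (max 0 (\<omega> (Ring j))) * indicator {\<omega>. pre j \<omega>} \<omega> \<partial>Omega mu p)"
    unfolding U_def by (rule nn_integral_suminf) measurable
  also have "\<dots> \<le> (\<Sum>j. ennreal (K * \<rho> ^ j) * 4)"
  proof (rule suminf_le)
    fix j
    have "(\<integral>\<^sup>+\<omega>. ennreal (max 0 (\<omega> (Ring j))) * indicator {\<omega>. pre j \<omega>} \<omega> \<partial>Omega mu p)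
        = (\<integral>\<^sup>+\<omega>. indicator {\<omega>. pre j \<omega>} \<omega> * ennreal (max 0 (\<omega> (Ring j))) \<partial>Omega mu p)"
      by (simp add: mult.commute)
    also have "\<dots> = (\<integral>\<^sup>+\<omega>. indicator {\<omega>. pre j \<omega>} \<omega> \<partial>Omega mu p) * (\<integral>\<^sup>+x. ennreal (max 0 x) \<partial>src_dist mu p (Ring j))"
      by (rule indep_coord[OF mu]) (auto simp: pre_upd indicator_def)
    also have "(\<integral>\<^sup>+\<omega>. indicator {\<omega>. pre j \<omega>} \<omega> \<partial>Omega mu p) = emeasure (Omega mu p) {\<omega>. pre j \<omega>}"
      by (rule nn_integral_indicator) (rule sets_Omega_Collect, measurable)
    also have "(\<integral>\<^sup>+x. ennreal (max 0 x) \<partial>src_dist mu p (Ring j)) \<le> 4"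
    proof -
      have "(\<integral>\<^sup>+x. ennreal (max 0 x) \<partial>src_dist mu p (Ring j)) \<le> (\<integral>\<^sup>+x. ennreal 2 * ennreal (exp (1 / 2 * x)) \<partial>src_dist mu p (Ring j))"
      proof (rule nn_integral_mono)
        fix x :: real
        have "ennreal (max 0 x) \<le> ennreal (2 * exp (1 / 2 * x))" by (rule ennreal_leI[OF max_le_exp])
        also have "\<dots> = ennreal 2 * ennreal (exp (1 / 2 * x))" by (subst ennreal_mult) auto
        finally show "ennreal (max 0 x) \<le> ennreal 2 * ennreal (exp (1 / 2 * x))" .
      qed
      also have "\<dots> = ennreal 2 * (\<integral>\<^sup>+x. ennreal (exp (1 / 2 * x)) \<partial>src_dist mu p (Ring j))"
        by (rule nn_integral_cmult) (simp add: expo_def)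
      also have "(\<integral>\<^sup>+x. ennreal (exp (1 / 2 * x)) \<partial>src_dist mu p (Ring j)) = ennreal 2"
        using expo_exp_moment[of 1 "1/2"] by simp
      finally show ?thesis by (simp add: ennreal_mult[symmetric])
    qed
    then have "emeasure (Omega mu p) {\<omega>. pre j \<omega>} * (\<integral>\<^sup>+x. ennreal (max 0 x) \<partial>src_dist mu p (Ring j)) \<le> ennreal (K * \<rho> ^ j) * 4"
      using pb[of j] by (intro mult_mono) auto
    finally show "(\<integral>\<^sup>+\<omega>. ennreal (max 0 (\<omega> (Ring j))) * indicator {\<omega>. pre j \<omega>} \<omega> \<partial>Omega mu p) \<le> ennreal (K * \<rho> ^ j) * 4" .
  qed auto
  also have "(\<Sum>j. ennreal (K * \<rho> ^ j) * 4) = ennreal (\<Sum>j. K * \<rho> ^ j) * 4"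
  proof -
    have "(\<Sum>j. ennreal (K * \<rho> ^ j) * 4) = (\<Sum>j. ennreal (K * \<rho> ^ j)) * 4"
      by (rule ennreal_suminf_multc)
    also have "(\<Sum>j. ennreal (K * \<rho> ^ j)) = ennreal (\<Sum>j. K * \<rho> ^ j)"
      using r K0 by (intro suminf_ennreal2) (auto intro!: summable_mult summable_geometric)
    finally show ?thesis .
  qed
  also have "\<dots> < \<infinity>" by (simp add: ennreal_mult_less_top)
  finally show ?thesis .
qed


lemma g_eq: "A \<in> sets ENV \<Longrightarrow> emeasure (env_law mu p t) A = emeasure (Omega mu p) {\<omega>. env \<omega> t \<in> A}"
  by (rule env_law_emeasure)

lemma g_meas:
  assumes mu: "0 < mu" and A: "A \<in> sets ENV"
  shows "(\<lambda>t. emeasure (env_law mu p t) A) \<in> borel_measurable borel"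
proof -
  interpret O: prob_space "Omega mu p" by (rule prob_Omega[OF mu])
  have m: "(\<lambda>z. env (snd z) (fst z)) \<in> measurable (borel \<Otimes>\<^sub>M Omega mu p) ENV"
    by (rule meas_env) auto
  define Qs where "Qs = (\<lambda>z. env (snd z) (fst z)) -` A \<inter> space (borel \<Otimes>\<^sub>M Omega mu p)"
  have Qs: "Qs \<in> sets (borel \<Otimes>\<^sub>M Omega mu p)"
    unfolding Qs_def by (rule measurable_sets[OF m A])
  have "(\<lambda>t. emeasure (Omega mu p) (Pair t -` Qs)) \<in> borel_measurable borel"
    by (rule O.measurable_emeasure_Pair[OF Qs])
  moreover have "Pair t -` Qs = {\<omega>. env \<omega> t \<in> A}" for t
    unfolding Qs_def by (auto simp: space_pair_measure)
  ultimately show ?thesis by (simp add: g_eq[OF A])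
qed

definition Nf :: "real \<Rightarrow> real \<Rightarrow> (int \<Rightarrow> bool) set \<Rightarrow> (src \<Rightarrow> real) \<Rightarrow> ennreal" where
  "Nf mu p A \<omega> = (\<integral>\<^sup>+t. emeasure (env_law mu p t) A * indicator {0..tau' \<omega>} t \<partial>lborel)"

lemma Nf_meas:
  assumes mu: "0 < mu" and A: "A \<in> sets ENV"
  shows "Nf mu p A \<in> borel_measurable (Omega mu p)"
proof -
  have [measurable]: "(\<lambda>t. emeasure (env_law mu p t) A) \<in> borel_measurable borel"
    by (rule g_meas[OF mu A])
  have "(\<lambda>(\<omega>, t). emeasure (env_law mu p t) A * indicator {0..tau' \<omega>} t) \<in> borel_measurable (Omega mu p \<Otimes>\<^sub>M lborel)"
  proof -
    have [measurable]: "Measurable.pred (Omega mu p \<Otimes>\<^sub>M lborel) (\<lambda>z. snd z \<le> tau' (fst z))"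
      unfolding pred_def using borel_measurable_le[of "\<lambda>z. snd z" "Omega mu p \<Otimes>\<^sub>M lborel" "\<lambda>z. tau' (fst z)"]
      by simp
    have "(\<lambda>z. emeasure (env_law mu p (snd z)) A * indicator {z. 0 \<le> snd z \<and> snd z \<le> tau' (fst z)} z) \<in> borel_measurable (Omega mu p \<Otimes>\<^sub>M lborel)"
      by measurable
    then show ?thesis by (simp add: split_beta' indicator_def)
  qed
  then show ?thesis unfolding Nf_def[abs_def]
    by (rule lborel.borel_measurable_nn_integral)
qed

lemma num_eq:
  assumes mu: "0 < mu"
  shows "(\<integral>\<^sup>+\<omega>. (\<integral>\<^sup>+t\<in>{0..tau1 \<omega>}. emeasure (env_law mu p t) A \<partial>lborel) \<partial>Omega mu p) = (\<integral>\<^sup>+\<omega>. Nf mu p A \<omega> \<partial>Omega mu p)"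
  unfolding Nf_def using AE_tau1[OF mu, of p] by (intro nn_integral_cong_AE) (auto elim: AE_mp)

lemma den_eq:
  assumes mu: "0 < mu"
  shows "(\<integral>\<^sup>+\<omega>. ennreal (tau1 \<omega>) \<partial>Omega mu p) = (\<integral>\<^sup>+\<omega>. ennreal (tau' \<omega>) \<partial>Omega mu p)"
  using AE_tau1[OF mu, of p] by (intro nn_integral_cong_AE) (auto elim: AE_mp)

lemma Q_fun_alt:
  assumes mu: "0 < mu"
  shows "Q_fun mu p A = (\<integral>\<^sup>+\<omega>. Nf mu p A \<omega> \<partial>Omega mu p) / (\<integral>\<^sup>+\<omega>. ennreal (tau' \<omega>) \<partial>Omega mu p)"
  unfolding Q_fun_def num_eq[OF mu] den_eq[OF mu] ..

lemma Q_countably_additive: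
  assumes mu: "0 < mu"
  shows "countably_additive (sets ENV) (Q_fun mu p)"
  unfolding countably_additive_def
proof safe
  fix A :: "nat \<Rightarrow> (int \<Rightarrow> bool) set"
  assume rA: "range A \<subseteq> sets ENV" and dA: "disjoint_family A" and UA: "\<Union> (range A) \<in> sets ENV"
  have Ai: "A i \<in> sets ENV" for i using rA by auto
  have sl: "sets (env_law mu p t) = sets ENV" for t unfolding env_law_def by simp
  have gsum: "emeasure (env_law mu p t) (\<Union> (range A)) = (\<Sum>i. emeasure (env_law mu p t) (A i))" for t
    using suminf_emeasure[of A "env_law mu p t"] rA dA sl by simp
  have [measurable]: "(\<lambda>t. emeasure (env_law mu p t) (A i)) \<in> borel_measurable borel" for i
    by (rule g_meas[OF mu Ai])
  have Nsum: "Nf mu p (\<Union> (range A)) \<omega> = (\<Sum>i. Nf mu p (A i) \<omega>)" for \<omega>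
  proof -
    have "Nf mu p (\<Union> (range A)) \<omega> = (\<integral>\<^sup>+t. (\<Sum>i. emeasure (env_law mu p t) (A i) * indicator {0..tau' \<omega>} t) \<partial>lborel)"
      unfolding Nf_def gsum by (simp add: ennreal_suminf_multc)
    also have "\<dots> = (\<Sum>i. Nf mu p (A i) \<omega>)"
      unfolding Nf_def
    proof (rule nn_integral_suminf)
      fix i
      have gm: "(\<lambda>t. emeasure (env_law mu p t) (A i)) \<in> borel_measurable lborel"
        using g_meas[OF mu Ai] by (simp add: measurable_lborel1)
      have im: "indicator {0..tau' \<omega>} \<in> borel_measurable lborel" by simp
      show "(\<lambda>t. emeasure (env_law mu p t) (A i) * indicator {0..tau' \<omega>} t) \<in> borel_measurable lborel"
        using gm im by (rule borel_measurable_times_ennreal)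
    qed
    finally show ?thesis .
  qed
  have "(\<integral>\<^sup>+\<omega>. Nf mu p (\<Union> (range A)) \<omega> \<partial>Omega mu p) = (\<Sum>i. \<integral>\<^sup>+\<omega>. Nf mu p (A i) \<omega> \<partial>Omega mu p)"
    unfolding Nsum by (rule nn_integral_suminf) (rule Nf_meas[OF mu Ai])
  then show "(\<Sum>i. Q_fun mu p (A i)) = Q_fun mu p (\<Union> (range A))"
    unfolding Q_fun_alt[OF mu] divide_ennreal_def by (simp add: ennreal_suminf_multc)
qed

lemma emeasure_Q:
  assumes mu: "0 < mu" and A: "A \<in> sets ENV"
  shows "emeasure (Q mu p) A = Q_fun mu p A"
  unfolding Q_def
proof (rule emeasure_measure_of_sigma)
  show "sigma_algebra (space ENV) (sets ENV)" by (rule sets.sigma_algebra_axioms)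
  show "positive (sets ENV) (Q_fun mu p)"
    unfolding positive_def Q_fun_def by simp
  show "countably_additive (sets ENV) (Q_fun mu p)" by (rule Q_countably_additive[OF mu])
qed (rule A)

lemma sets_Q: "sets (Q mu p) = sets ENV"
  unfolding Q_def using sets.sigma_sets_eq[of ENV] by (simp add: sets.space_closed)


lemma tau'_ge_Ring0: "Good \<omega> \<Longrightarrow> \<omega> (Ring 0) \<le> tau' \<omega>"
proof -
  assume G: "Good \<omega>"
  then have R: "\<forall>k. 0 < \<omega> (Ring k)" by (simp add: Good_def)
  have "ring_time \<omega> 0 \<le> ring_time \<omega> (nstop \<omega>)" by (rule ring_time_mono_le[OF R]) simp
  then show ?thesis using Dk_nonneg[of \<omega> "nstop \<omega>"] unfolding tau'_def by (simp add: ring_time_0)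
qed

theorem corollary3p5:
  fixes mu p :: real
  assumes "0 < mu" and "0 < p" and "p < 1"
  shows "absolutely_continuous (pi_p p) (Q mu p) \<and> absolutely_continuous (Q mu p) (pi_p p)"
proof
  have mu: "0 < mu" by fact
  show "absolutely_continuous (pi_p p) (Q mu p)"
    unfolding absolutely_continuous_def
  proof
    fix A assume "A \<in> null_sets (pi_p p)"
    then have A: "A \<in> sets ENV" and A0: "emeasure (pi_p p) A = 0"
      using sets_ENV_pi[of p] by auto
    have "Nf mu p A \<omega> = 0" for \<omega>
      unfolding Nf_def g_eq[OF A] env_null[OF mu A A0] by simp
    then have "Nf mu p A = (\<lambda>_. 0)" by (intro ext)
    then have "Q_fun mu p A = 0" unfolding Q_fun_alt[OF mu] by simp
    then show "A \<in> null_sets (Q mu p)"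
      using A emeasure_Q[OF mu A, where p=p] sets_Q[of mu p] by (intro null_setsI) simp_all
  qed
next
  have mu: "0 < mu" by fact
  show "absolutely_continuous (Q mu p) (pi_p p)"
    unfolding absolutely_continuous_def
  proof
    fix A assume "A \<in> null_sets (Q mu p)"
    then have A: "A \<in> sets ENV" and Q0: "emeasure (Q mu p) A = 0"
      using sets_Q[of mu p] by auto
    have Af: "A \<in> sets (pi_p p)" using A sets_ENV_pi[of p] by simp
    have Q0': "(\<integral>\<^sup>+\<omega>. Nf mu p A \<omega> \<partial>Omega mu p) / (\<integral>\<^sup>+\<omega>. ennreal (tau' \<omega>) \<partial>Omega mu p) = 0"
      using Q0 emeasure_Q[OF mu A, where p=p] Q_fun_alt[OF mu, where p=p and A=A] by simp
    have fin: "(\<integral>\<^sup>+\<omega>. ennreal (tau' \<omega>) \<partial>Omega mu p) \<noteq> top"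
      using E_tau'_finite[OF mu, of p] by simp
    have N0: "(\<integral>\<^sup>+\<omega>. Nf mu p A \<omega> \<partial>Omega mu p) = 0"
      using Q0' fin by simp
    show "A \<in> null_sets (pi_p p)"
    proof (rule ccontr)
      assume "A \<notin> null_sets (pi_p p)"
      then have pos: "emeasure (pi_p p) A \<noteq> 0" using Af by auto
      define c where "c = ennreal (exp (- 1)) * emeasure (pi_p p) A"
      have cpos: "c \<noteq> 0" using pos by (simp add: c_def)
      have low: "c * indicator {\<omega>. 1 < \<omega> (Ring 0)} \<omega> \<le> Nf mu p A \<omega>" if G: "Good \<omega>" for \<omega>
      proof (cases "1 < \<omega> (Ring 0)")
        case False then show ?thesis by simp
        next
        case True
        then have t1: "1 \<le> tau' \<omega>" using tau'_ge_Ring0[OF G] by simp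
        have "c * indicator {\<omega>. 1 < \<omega> (Ring 0)} \<omega> = (\<integral>\<^sup>+t. c * indicator {0..1::real} t \<partial>lborel)"
        proof -
          have s01: "{0..1::real} \<in> sets lborel" by simp
          have e01: "emeasure lborel {0..1::real} = 1" by simp
          have "(\<integral>\<^sup>+t. c * indicator {0..1::real} t \<partial>lborel) = c * emeasure lborel {0..1::real}"
            by (rule nn_integral_cmult_indicator[OF s01])
          then show ?thesis using True e01 by simp
        qed
        also have "\<dots> \<le> Nf mu p A \<omega>"
          unfolding Nf_def
        proof (rule nn_integral_mono)
          fix t :: real
          show "c * indicator {0..1::real} t \<le> emeasure (env_law mu p t) A * indicator {0..tau' \<omega>} t"
          proof (cases "t \<in> {0..1}")
            case False then show ?thesis by simp
          next
            case True
            then have t0: "0 \<le> t" "t \<le> 1" by auto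
            have "c \<le> ennreal (exp (- t)) * emeasure (pi_p p) A"
              unfolding c_def using t0 by (intro mult_right_mono ennreal_leI) auto
            also have "\<dots> \<le> emeasure (env_law mu p t) A"
              unfolding g_eq[OF A] by (rule env_lower[OF mu A t0(1)])
            finally show ?thesis using True t1 by (simp add: indicator_def)
          qed
        qed
        finally show ?thesis .
      qed
      have "(\<integral>\<^sup>+\<omega>. c * indicator {\<omega>. 1 < \<omega> (Ring 0)} \<omega> \<partial>Omega mu p) \<le> (\<integral>\<^sup>+\<omega>. Nf mu p A \<omega> \<partial>Omega mu p)"
        using AE_Good[OF mu, of p] low by (intro nn_integral_mono_AE) (auto elim: AE_mp)
      moreover have "(\<integral>\<^sup>+\<omega>. c * indicator {\<omega>. 1 < \<omega> (Ring 0)} \<omega> \<partial>Omega mu p) = c * ennreal (exp (- 1))"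
      proof -
        have S: "{\<omega>. 1 < \<omega> (Ring 0)} \<in> sets (Omega mu p)" by (rule sets_Omega_Collect) measurable
        have "(\<integral>\<^sup>+\<omega>. c * indicator {\<omega>. 1 < \<omega> (Ring 0)} \<omega> \<partial>Omega mu p) = c * emeasure (Omega mu p) {\<omega>. 1 < \<omega> (Ring 0)}"
          by (rule nn_integral_cmult_indicator[OF S])
        also have "emeasure (Omega mu p) {\<omega>. 1 < \<omega> (Ring 0)} = emeasure (Omega mu p) {\<omega>. True \<and> \<omega> (Ring 0) \<in> {1<..}}"
          by simp
        also have "\<dots> = emeasure (Omega mu p) {\<omega>. True} * emeasure (src_dist mu p (Ring 0)) {1<..}"
          by (rule indep_coord_set[OF mu]) auto
        also have "emeasure (Omega mu p) {\<omega>. True} = 1"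
          using prob_space.emeasure_space_1[OF prob_Omega[OF mu, of p]] by simp
        also have "emeasure (src_dist mu p (Ring 0)) {1<..} = ennreal (exp (- 1))"
          using expo_gt[of 1 1] by simp
        finally show ?thesis by simp
      qed
      ultimately have "c * ennreal (exp (- 1)) \<le> 0" using N0 by simp
      then show False using cpos by simp
    qed
  qed
qed

end
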